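(* Let Assumption 2 hold. For $M>0$ define $W^{(M)}_{ij}=\mathbf 1_{|W_{ij}|\le M}W_{ij}-\mathbb E[\mathbf 1_{|W_{ij}|\le M}W_{ij}]$, $X^{(n,M)}_{ij}=\sqrt{s^{(n)}_{ij}}W^{(M)}_{ij}$, and for $k\in[n]$ \[ P_k^{(n)}=\sum_{I\subset[n],|I|=k}\det X^{(n)}_I,\qquad P_k^{(n,M)}=\sum_{I\subset[n],|I|=k}\det X^{(n,M)}_I . \] Then for each fixed integer $k>0$ there exist numbers $\varepsilon_M$ with $\varepsilon_M\to0$ as $M\to\infty$ such that $\sup_n\mathbb E|P_k^{(n)}-P_k^{(n,M)}|^2\le\varepsilon_M$ (the supremum over $n\ge k$).
   Context: Setting: $(W_{ij})$ i.i.d. complex, $\mathbb EW_{11}=0$, $\mathbb E|W_{11}|^2=1$; $S^{(n)}=[s^{(n)}_{ij}]$ deterministic non-negative $n\times n$; $X^{(n)}_{ij}=\sqrt{s^{(n)}_{ij}}W_{ij}$. For $I\subset[n]$, $M_I$ denotes the principal submatrix with rows and columns in $I$. Assumption 2: for each $\varepsilon\in(0,1]$, $\liminf_n\min_{\gamma\in[0,1-\varepsilon]}\det(I_n-\gamma S^{(n)})>0$. *)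

theory Defs
  imports "HOL-Probability.Probability" "HOL-Combinatorics.Permutations"
begin

text \<open>Determinant of the principal submatrix of A with rows and columns in the finite
  index set I (independent of any ordering of I).\<close>
definition detI :: "nat set \<Rightarrow> (nat \<Rightarrow> nat \<Rightarrow> 'a::comm_ring_1) \<Rightarrow> 'a" where
  "detI I A = (\<Sum>p\<in>{p. p permutes I}. of_int (sign p) * (\<Prod>i\<in>I. A i (p i)))"

text \<open>Assumption 2, for the n x n matrices S n (entries S n i j, i,j < n; index set [n] = {0..<n}).\<close>
definition assumption2 :: "(nat \<Rightarrow> nat \<Rightarrow> nat \<Rightarrow> real) \<Rightarrow> bool" where
  "assumption2 S \<longleftrightarrow> (\<forall>\<epsilon>::real. 0 < \<epsilon> \<and> \<epsilon> \<le> 1 \<longrightarrow>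
     liminf (\<lambda>n. ereal (Inf ((\<lambda>\<gamma>. detI {..<n} (\<lambda>i j. (if i = j then 1 else 0) - \<gamma> * S n i j))
                               ` {0..1-\<epsilon>}))) > 0)"

definition trunc_centered :: "'s measure \<Rightarrow> real \<Rightarrow> ('s \<Rightarrow> complex) \<Rightarrow> 's \<Rightarrow> complex" where
  "trunc_centered Pr m V \<omega> =
     (if cmod (V \<omega>) \<le> m then V \<omega> else 0)
     - integral\<^sup>L Pr (\<lambda>\<omega>'. if cmod (V \<omega>') \<le> m then V \<omega>' else 0)"

definition Pk :: "nat \<Rightarrow> nat \<Rightarrow> (nat \<Rightarrow> nat \<Rightarrow> complex) \<Rightarrow> complex" where
  "Pk n k X = (\<Sum>I\<in>{I. I \<subseteq> {..<n} \<and> card I = k}. detI I X)"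

end

theory Submission
  imports Defs "Jordan_Normal_Form.Determinant" "HOL-Combinatorics.Orbits"
begin

definition Sm :: "nat \<Rightarrow> (nat \<Rightarrow> nat \<Rightarrow> real) \<Rightarrow> real mat" where
  "Sm n s = mat n n (\<lambda>(i,j). s i j)"
definition Mv :: "nat \<Rightarrow> (nat \<Rightarrow> nat \<Rightarrow> real) \<Rightarrow> real \<Rightarrow> real mat" where
  "Mv n s v = 1\<^sub>m n - v \<cdot>\<^sub>m Sm n s"
definition gd :: "nat \<Rightarrow> (nat \<Rightarrow> nat \<Rightarrow> real) \<Rightarrow> real \<Rightarrow> real" where
  "gd n s v = det (Mv n s v)"
definition Nv :: "nat \<Rightarrow> (nat \<Rightarrow> nat \<Rightarrow> real) \<Rightarrow> real \<Rightarrow> real mat" where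
  "Nv n s v = (1 / gd n s v) \<cdot>\<^sub>m adj_mat (Mv n s v)"
definition trm :: "real mat \<Rightarrow> real" where
  "trm A = (\<Sum>i<dim_row A. A $$ (i,i))"

lemma Sm_dim[simp]: "dim_row (Sm n s) = n" "dim_col (Sm n s) = n" by (simp_all add: Sm_def)
lemma Sm_carrier[simp]: "Sm n s \<in> carrier_mat n n" by (simp add: Sm_def)
lemma Mv_dim[simp]: "dim_row (Mv n s v) = n" "dim_col (Mv n s v) = n" by (simp_all add: Mv_def)
lemma Mv_carrier[simp]: "Mv n s v \<in> carrier_mat n n" by (rule carrier_matI) simp_all
lemma Nv_carrier[simp]: "Nv n s v \<in> carrier_mat n n" by (simp add: Nv_def adj_mat(1)[OF Mv_carrier])
lemma Nv_dim[simp]: "dim_row (Nv n s v) = n" "dim_col (Nv n s v) = n" 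
  by (simp_all add: carrier_matD[OF Nv_carrier])
lemma mult_carrier_sq[simp]: "A \<in> carrier_mat n n \<Longrightarrow> B \<in> carrier_mat n n \<Longrightarrow> A * B \<in> carrier_mat n n"
  by (rule mult_carrier_mat)

lemma Sm_index[simp]: "i < n \<Longrightarrow> j < n \<Longrightarrow> Sm n s $$ (i,j) = s i j" by (simp add: Sm_def)
lemma Mv_index[simp]: "i < n \<Longrightarrow> j < n \<Longrightarrow> Mv n s v $$ (i,j) = (if i = j then 1 else 0) - v * s i j"
  by (simp add: Mv_def)


lemma mult_entry:
  assumes "A \<in> carrier_mat n n" "B \<in> carrier_mat n n" "i < n" "j < n"
  shows "(A * B) $$ (i,j) = (\<Sum>l<n. A $$ (i,l) * B $$ (l,j))"
  using assms by (simp add: scalar_prod_def atLeast0LessThan)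

lemma smult_inv_one: "(c::real) \<noteq> 0 \<Longrightarrow> (1 / c) \<cdot>\<^sub>m (c \<cdot>\<^sub>m 1\<^sub>m n) = 1\<^sub>m n"
  by (rule eq_matI) auto

lemma mult_entry2[simp]:
  "i < dim_row A \<Longrightarrow> j < dim_col B \<Longrightarrow> dim_col A = dim_row B \<Longrightarrow>
   (A * B) $$ (i,j) = (\<Sum>l<dim_row B. A $$ (i,l) * B $$ (l,j))"
  by (simp add: scalar_prod_def atLeast0LessThan)

lemma Nv_inv:
  assumes "gd n s v \<noteq> 0"
  shows "Mv n s v * Nv n s v = 1\<^sub>m n" "Nv n s v * Mv n s v = 1\<^sub>m n"
proof -
  have A: "Mv n s v \<in> carrier_mat n n" by simp
  have adj: "adj_mat (Mv n s v) \<in> carrier_mat n n" by (rule adj_mat(1)[OF A])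
  have g: "det (Mv n s v) \<noteq> 0" using assms by (simp add: gd_def)
  show "Mv n s v * Nv n s v = 1\<^sub>m n"
    unfolding Nv_def gd_def mult_smult_distrib[OF A adj] adj_mat(2)[OF A] using smult_inv_one[OF g] .
  show "Nv n s v * Mv n s v = 1\<^sub>m n"
    unfolding Nv_def gd_def mult_smult_assoc_mat[OF adj A] adj_mat(3)[OF A] using smult_inv_one[OF g] .
qed

lemma Mv_factor:
  assumes "gd n s v \<noteq> 0"
  shows "Mv n s x = Mv n s v * (1\<^sub>m n - (x - v) \<cdot>\<^sub>m (Nv n s v * Sm n s))"
proof -
  have "Mv n s v * (1\<^sub>m n - (x - v) \<cdot>\<^sub>m (Nv n s v * Sm n s))
     = Mv n s v - (x - v) \<cdot>\<^sub>m ((Mv n s v * Nv n s v) * Sm n s)"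
    by (subst mult_minus_distrib_mat[of _ n n], auto simp: minus_carrier_mat
       mult_smult_distrib[OF Mv_carrier mult_carrier_mat[OF Nv_carrier Sm_carrier]]
       assoc_mult_mat[OF Mv_carrier Nv_carrier Sm_carrier])
  also have "\<dots> = Mv n s x"
    using Nv_inv[OF assms]
    by (intro eq_matI) (auto simp: Mv_def left_diff_distrib right_diff_distrib)
  finally show ?thesis by simp
qed

lemma resolvent:
  assumes "gd n s v \<noteq> 0" "gd n s w \<noteq> 0"
  shows "Nv n s w = Nv n s v + (w - v) \<cdot>\<^sub>m (Nv n s w * Sm n s * Nv n s v)"
proof -
  have "Mv n s v = Mv n s w + (w - v) \<cdot>\<^sub>m Sm n s"
    by (intro eq_matI) (auto simp: Mv_def left_diff_distrib right_diff_distrib)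
  hence "Nv n s w * Mv n s v * Nv n s v = Nv n s w * (Mv n s w + (w - v) \<cdot>\<^sub>m Sm n s) * Nv n s v" by simp
  also have "\<dots> = (Nv n s w * Mv n s w) * Nv n s v + (w - v) \<cdot>\<^sub>m (Nv n s w * Sm n s * Nv n s v)"
    by (subst mult_add_distrib_mat[of _ n n], auto simp: add_mult_distrib_mat[OF mult_carrier_sq[OF Nv_carrier Mv_carrier] smult_carrier_mat[OF mult_carrier_sq[OF Nv_carrier Sm_carrier]] Nv_carrier]
         mult_smult_distrib[OF Nv_carrier Sm_carrier]
         mult_smult_assoc_mat[OF mult_carrier_mat[OF Nv_carrier Sm_carrier] Nv_carrier])
  finally have "Nv n s w * Mv n s v * Nv n s v = Nv n s v + (w - v) \<cdot>\<^sub>m (Nv n s w * Sm n s * Nv n s v)"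
    using Nv_inv[OF assms(2)] by simp
  moreover have "Nv n s w * Mv n s v * Nv n s v = Nv n s w"
    using Nv_inv[OF assms(1)] by (simp add: assoc_mult_mat[OF Nv_carrier Mv_carrier Nv_carrier])
  ultimately show ?thesis by simp
qed

lemma deriv_det_id:
  assumes B: "B \<in> carrier_mat n n"
  shows "((\<lambda>h. det (1\<^sub>m n - h \<cdot>\<^sub>m B)) has_real_derivative (- trm B)) (at 0)"
proof -
  define f where "f p i h = (if i = p i then 1 else 0) - h * B $$ (i, p i)" for p :: "nat\<Rightarrow>nat" and i h
  define P where "P = {p. p permutes {0..<n}}"
  have eq: "(\<lambda>h. det (1\<^sub>m n - h \<cdot>\<^sub>m B)) = (\<lambda>h. \<Sum>p\<in>P. of_int (sign p) * (\<Prod>i\<in>{0..<n}. f p i h))"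
  proof
    fix h
    have c: "1\<^sub>m n - h \<cdot>\<^sub>m B \<in> carrier_mat n n" using B by (simp add: minus_carrier_mat)
    show "det (1\<^sub>m n - h \<cdot>\<^sub>m B) = (\<Sum>p\<in>P. of_int (sign p) * (\<Prod>i\<in>{0..<n}. f p i h))"
      unfolding det_def'[OF c] P_def
      by (intro sum.cong refl arg_cong2[where f="(*)"] prod.cong)
         (use B in \<open>auto simp: f_def dest: permutes_in_image\<close>)
  qed
  have d: "((\<lambda>h. \<Sum>p\<in>P. of_int (sign p) * (\<Prod>i\<in>{0..<n}. f p i h)) has_real_derivative
      (\<Sum>p\<in>P. of_int (sign p) * (\<Sum>i\<in>{0..<n}. (- B $$ (i, p i)) * (\<Prod>j\<in>{0..<n}-{i}. f p j 0)))) (at 0)"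
    by (intro DERIV_sum DERIV_cmult has_field_derivative_prod) (auto simp: f_def intro!: derivative_eq_intros)
  have z: "(\<Sum>i\<in>{0..<n}. (- B $$ (i, p i)) * (\<Prod>j\<in>{0..<n}-{i}. f p j 0)) = 0"
    if p: "p \<in> P" "p \<noteq> id" for p
  proof (intro sum.neutral ballI)
    fix i assume i: "i \<in> {0..<n}"
    from p(2) obtain j0 where j0: "p j0 \<noteq> j0" by (auto simp: fun_eq_iff)
    have pp: "p permutes {0..<n}" using p(1) by (simp add: P_def)
    have j0n: "j0 \<in> {0..<n}" using j0 pp by (meson permutes_not_in)
    have j1n: "p j0 \<in> {0..<n}" using j0n pp by (simp add: permutes_in_image)
    have j1: "p (p j0) \<noteq> p j0" using j0 pp by (metis permutes_inj injD)
    have "\<exists>j\<in>{0..<n}-{i}. f p j 0 = 0"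
    proof (cases "i = j0")
      case True thus ?thesis using j0 j1 j1n by (intro bexI[of _ "p j0"]) (auto simp: f_def)
    next
      case False thus ?thesis using j0 j0n by (intro bexI[of _ j0]) (auto simp: f_def)
    qed
    hence "(\<Prod>j\<in>{0..<n}-{i}. f p j 0) = 0" by (simp add: prod_zero)
    thus "(- B $$ (i, p i)) * (\<Prod>j\<in>{0..<n}-{i}. f p j 0) = 0" by simp
  qed
  have idP: "id \<in> P" by (simp add: P_def permutes_id)
  have finP: "finite P" by (simp add: P_def finite_permutations)
  have "(\<Sum>p\<in>P. of_int (sign p) * (\<Sum>i\<in>{0..<n}. (- B $$ (i, p i)) * (\<Prod>j\<in>{0..<n}-{i}. f p j 0)))
     = of_int (sign (id::nat\<Rightarrow>nat)) * (\<Sum>i\<in>{0..<n}. (- B $$ (i, id i)) * (\<Prod>j\<in>{0..<n}-{i}. f id j 0))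
       + (\<Sum>p\<in>P-{id}. of_int (sign p) * (\<Sum>i\<in>{0..<n}. (- B $$ (i, p i)) * (\<Prod>j\<in>{0..<n}-{i}. f p j 0)))"
    by (rule sum.remove[OF finP idP])
  also have "(\<Sum>p\<in>P-{id}. of_int (sign p) * (\<Sum>i\<in>{0..<n}. (- B $$ (i, p i)) * (\<Prod>j\<in>{0..<n}-{i}. f p j 0))) = 0"
    using z by (intro sum.neutral) auto
  also have "of_int (sign (id::nat\<Rightarrow>nat)) * (\<Sum>i\<in>{0..<n}. (- B $$ (i, id i)) * (\<Prod>j\<in>{0..<n}-{i}. f id j 0)) + 0 = - trm B"
    using B by (simp add: f_def sign_id trm_def sum_negf atLeast0LessThan)
  finally show ?thesis using d eq by simp
qed

lemma gd_deriv:
  assumes g: "gd n s v \<noteq> 0"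
  shows "(gd n s has_real_derivative (- gd n s v * trm (Nv n s v * Sm n s))) (at v)"
proof -
  let ?B = "Nv n s v * Sm n s"
  have B: "?B \<in> carrier_mat n n" by simp
  have eq: "gd n s = (\<lambda>x. gd n s v * det (1\<^sub>m n - (x - v) \<cdot>\<^sub>m ?B))"
  proof
    fix x
    show "gd n s x = gd n s v * det (1\<^sub>m n - (x - v) \<cdot>\<^sub>m ?B)"
      unfolding gd_def
      by (subst Mv_factor[OF g, of x], rule det_mult[of _ n], auto simp: minus_carrier_mat)
  qed
  have "((\<lambda>x. det (1\<^sub>m n - (x - v) \<cdot>\<^sub>m ?B)) has_real_derivative (- trm ?B) * 1) (at v)"
    using deriv_det_id[OF B]
    by (intro DERIV_chain2[where f="\<lambda>h. det (1\<^sub>m n - h \<cdot>\<^sub>m ?B)" and g="\<lambda>x. x - v"])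
       (auto intro!: derivative_eq_intros)
  hence "((\<lambda>x. gd n s v * det (1\<^sub>m n - (x - v) \<cdot>\<^sub>m ?B)) has_real_derivative gd n s v * (- trm ?B * 1)) (at v)"
    by (rule DERIV_cmult)
  thus ?thesis by (subst eq) simp
qed



declare index_mult_mat(1)[simp del]


definition nonneg :: "nat \<Rightarrow> real mat \<Rightarrow> bool" where
  "nonneg n A = (\<forall>i<n. \<forall>j<n. 0 \<le> A $$ (i,j))"

lemma det_bound:
  fixes B :: "real mat"
  assumes B: "B \<in> carrier_mat m m" and b: "\<And>i j. i<m \<Longrightarrow> j<m \<Longrightarrow> \<bar>B$$(i,j)\<bar> \<le> b"
  shows "\<bar>det B\<bar> \<le> fact m * b^m"
proof -
  have "\<bar>det B\<bar> \<le> (\<Sum>p\<in>{p. p permutes {0..<m}}. \<bar>of_int (sign p) * (\<Prod>i=0..<m. B$$(i,p i))\<bar>)"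
    unfolding det_def'[OF B] by (rule sum_abs)
  also have "\<dots> \<le> (\<Sum>p\<in>{p. p permutes {0..<m}}. b^m)"
  proof (rule sum_mono)
    fix p assume p: "p \<in> {p. p permutes {0..<m}}"
    have "\<bar>of_int (sign p) * (\<Prod>i=0..<m. B$$(i,p i))\<bar> = (\<Prod>i=0..<m. \<bar>B$$(i,p i)\<bar>)"
      by (simp add: abs_mult sign_def abs_prod)
    also have "\<dots> \<le> (\<Prod>i=0..<m. b)"
      by (rule prod_mono) (use p b in \<open>auto dest: permutes_in_image\<close>)
    also have "\<dots> = b^m" by simp
    finally show "\<bar>of_int (sign p) * (\<Prod>i=0..<m. B$$(i,p i))\<bar> \<le> b^m" .
  qed
  also have "\<dots> = fact m * b^m" by (simp add: card_permutations[of "{0..<m}" m])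
  finally show ?thesis .
qed

lemma Nv_index: "i < n \<Longrightarrow> j < n \<Longrightarrow> Nv n s v $$ (i,j) = (1 / gd n s v) * cofactor (Mv n s v) j i"
  by (simp add: Nv_def adj_mat_def)

lemma Nv_bound:
  assumes s: "\<And>i j. i<n \<Longrightarrow> j<n \<Longrightarrow> \<bar>s i j\<bar> \<le> smax" and v: "0 \<le> v" "v \<le> \<gamma>"
    and c: "c \<le> gd n s v" "0 < c" and i: "i < n" and j: "j < n"
  shows "\<bar>Nv n s v $$ (i,j)\<bar> \<le> fact (n-1) * (1 + \<gamma> * smax)^(n-1) / c"
proof -
  have ent: "\<bar>mat_delete (Mv n s v) j i $$ (a,b)\<bar> \<le> 1 + \<gamma> * smax" if "a < n-1" "b < n-1" for a b
  proof -
    define a' where "a' = (if a < j then a else Suc a)"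
    define b' where "b' = (if b < i then b else Suc b)"
    have ab: "a' < n" "b' < n" using that by (auto simp: a'_def b'_def)
    have "mat_delete (Mv n s v) j i $$ (a,b) = Mv n s v $$ (a', b')"
      using that by (simp add: mat_delete_def a'_def b'_def)
    also have "\<dots> = (if a' = b' then 1 else 0) - v * s a' b'" using ab by simp
    finally have e: "mat_delete (Mv n s v) j i $$ (a,b) = (if a' = b' then 1 else 0) - v * s a' b'" .
    have "\<bar>v * s a' b'\<bar> \<le> \<gamma> * smax"
      using s[OF ab] v by (simp add: abs_mult mult_mono)
    thus ?thesis unfolding e by (auto simp: abs_le_iff)
  qed
  have D: "mat_delete (Mv n s v) j i \<in> carrier_mat (n-1) (n-1)"
    using mat_delete_carrier[OF Mv_carrier] by blast
  have "\<bar>det (mat_delete (Mv n s v) j i)\<bar> \<le> fact (n-1) * (1 + \<gamma> * smax)^(n-1)"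
    by (rule det_bound[OF D ent])
  moreover have "\<bar>Nv n s v $$ (i,j)\<bar> = \<bar>det (mat_delete (Mv n s v) j i)\<bar> / gd n s v"
    using c i j by (simp add: Nv_index cofactor_def abs_mult)
  moreover have "0 < gd n s v" using c by simp
  ultimately show ?thesis using c
    by (smt (verit, best) frac_le abs_ge_zero)
qed

lemma min_arg:
  assumes X: "X \<in> carrier_mat n n" and P: "P \<in> carrier_mat n n" and C: "C \<in> carrier_mat n n"
    and eq: "X = P + X * C" and Pn: "nonneg n P" and Cn: "nonneg n C"
    and cs: "\<And>j. j < n \<Longrightarrow> (\<Sum>l<n. C$$(l,j)) < 1"
  shows "nonneg n X"
proof (rule ccontr)
  assume "\<not> nonneg n X"
  then obtain i j where ij: "i < n" "j < n" "X$$(i,j) < 0" by (auto simp: nonneg_def not_le)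
  define V where "V = (\<lambda>(i,j). X$$(i,j)) ` ({..<n}\<times>{..<n})"
  define m where "m = Min V"
  have fin: "finite V" by (simp add: V_def)
  have ne: "V \<noteq> {}" using ij by (auto simp: V_def)
  have "m \<in> V" unfolding m_def using fin ne by (rule Min_in)
  then obtain i0 j0 where i0: "i0 < n" "j0 < n" "m = X$$(i0,j0)" by (auto simp: V_def)
  have mle: "m \<le> X$$(a,b)" if "a < n" "b < n" for a b
    unfolding m_def using fin that by (intro Min_le) (auto simp: V_def)
  have mneg: "m < 0" using mle[OF ij(1,2)] ij(3) by simp
  have "X$$(i0,j0) = (P + X * C)$$(i0,j0)" using eq by simp
  also have "\<dots> = P$$(i0,j0) + (\<Sum>l<n. X$$(i0,l) * C$$(l,j0))"
    using i0 X P C by (simp add: carrier_matD)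
  also have "\<dots> \<ge> 0 + (\<Sum>l<n. m * C$$(l,j0))"
    using i0 Pn Cn mle by (intro add_mono sum_mono mult_right_mono) (auto simp: nonneg_def)
  finally have "m \<ge> m * (\<Sum>l<n. C$$(l,j0))" using i0 by (simp add: sum_distrib_left)
  moreover have "m * (\<Sum>l<n. C$$(l,j0)) > m * 1"
    using cs[OF i0(2)] mneg by (intro mult_strict_left_mono_neg) auto
  ultimately show False by simp
qed

lemma N_step:
  assumes s: "\<And>i j. i<n \<Longrightarrow> j<n \<Longrightarrow> 0 \<le> s i j" and vw: "v \<le> w"
    and gv: "gd n s v \<noteq> 0" and gw: "gd n s w \<noteq> 0" and Nvn: "nonneg n (Nv n s v)"
    and cs: "\<And>j. j < n \<Longrightarrow> (w - v) * (\<Sum>l<n. (Sm n s * Nv n s v)$$(l,j)) < 1"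
  shows "nonneg n (Nv n s w)"
proof -
  define C where "C = (w - v) \<cdot>\<^sub>m (Sm n s * Nv n s v)"
  have Cc: "C \<in> carrier_mat n n" by (simp add: C_def)
  have "(w - v) \<cdot>\<^sub>m (Nv n s w * Sm n s * Nv n s v) = Nv n s w * C"
    unfolding C_def
    by (simp add: assoc_mult_mat[OF Nv_carrier Sm_carrier Nv_carrier]
        mult_smult_distrib[OF Nv_carrier mult_carrier_sq[OF Sm_carrier Nv_carrier]])
  hence eq: "Nv n s w = Nv n s v + Nv n s w * C" using resolvent[OF gv gw] by simp
  have SNn: "0 \<le> (Sm n s * Nv n s v)$$(l,j)" if "l < n" "j < n" for l j
    using that Nvn s by (auto simp: nonneg_def intro!: sum_nonneg)
  have Cn: "nonneg n C" using SNn vw by (simp add: nonneg_def C_def)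
  show ?thesis
  proof (rule min_arg[OF Nv_carrier Nv_carrier Cc eq Nvn Cn])
    fix j assume j: "j < n"
    have "(\<Sum>l<n. C$$(l,j)) = (w - v) * (\<Sum>l<n. (Sm n s * Nv n s v)$$(l,j))"
      using j by (simp add: C_def sum_distrib_left)
    thus "(\<Sum>l<n. C$$(l,j)) < 1" using cs[OF j] by simp
  qed
qed

lemma Nv_zero: "Nv n s 0 = 1\<^sub>m n"
proof -
  have M0: "Mv n s 0 = 1\<^sub>m n" by (rule eq_matI) (auto simp: Mv_def)
  have g: "gd n s 0 \<noteq> 0" by (simp add: gd_def M0)
  have "Mv n s 0 = 1\<^sub>m n" by (rule M0)
  hence "1\<^sub>m n * Nv n s 0 = 1\<^sub>m n" using Nv_inv(1)[OF g] by simp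
  thus ?thesis by simp
qed

lemma N_nonneg:
  assumes s: "\<And>i j. i<n \<Longrightarrow> j<n \<Longrightarrow> 0 \<le> s i j" and \<gamma>: "0 \<le> \<gamma>"
    and c: "\<And>v. 0 \<le> v \<Longrightarrow> v \<le> \<gamma> \<Longrightarrow> c \<le> gd n s v" and c0: "0 < c"
    and v: "0 \<le> v" "v \<le> \<gamma>"
  shows "nonneg n (Nv n s v)"
proof -
  define smax where "smax = (\<Sum>i<n. \<Sum>j<n. s i j)"
  have sle: "s i j \<le> smax" if "i < n" "j < n" for i j
  proof -
    have "s i j \<le> (\<Sum>j<n. s i j)" using that s by (intro member_le_sum) auto
    also have "\<dots> \<le> smax" unfolding smax_def using that s by (intro member_le_sum sum_nonneg) auto
    finally show ?thesis .
  qed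
  have smax0: "0 \<le> smax" unfolding smax_def using s by (intro sum_nonneg) auto
  define K where "K = fact (n-1) * (1 + \<gamma> * smax)^(n-1) / c"
  have K0: "0 \<le> K" unfolding K_def using \<gamma> smax0 c0 by simp
  have NB: "\<bar>Nv n s u $$ (i,j)\<bar> \<le> K" if "0 \<le> u" "u \<le> \<gamma>" "i < n" "j < n" for u i j
    unfolding K_def by (rule Nv_bound[of n s smax u \<gamma> c]) (use that s sle c c0 in auto)
  define \<delta> where "\<delta> = 1 / (K * smax + 1)"
  have Ks: "0 \<le> K * smax" using K0 smax0 by simp
  have \<delta>0: "0 < \<delta>" unfolding \<delta>_def using Ks by simp
  have colsum: "(\<Sum>l<n. (Sm n s * Nv n s u)$$(l,j)) \<le> K * smax" if "0 \<le> u" "u \<le> \<gamma>" "j < n" for u j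
  proof -
    have "(\<Sum>l<n. (Sm n s * Nv n s u)$$(l,j)) = (\<Sum>l<n. \<Sum>m<n. s l m * Nv n s u $$ (m,j))"
      using that by simp
    also have "\<dots> \<le> (\<Sum>l<n. \<Sum>m<n. s l m * K)"
      using that s NB by (intro sum_mono mult_left_mono) (auto simp: abs_le_iff)
    also have "\<dots> = K * smax" by (simp add: smax_def sum_distrib_left sum_distrib_right mult_ac)
    finally show ?thesis .
  qed
  have gpos: "gd n s u \<noteq> 0" if "0 \<le> u" "u \<le> \<gamma>" for u using c[OF that] c0 by simp
  have main: "\<forall>u. 0 \<le> u \<and> u \<le> \<gamma> \<and> u \<le> real m * \<delta> \<longrightarrow> nonneg n (Nv n s u)" for m
  proof (induction m)
    case 0
    thus ?case using \<delta>0 by (auto simp: Nv_zero nonneg_def)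
  next
    case (Suc m)
    show ?case
    proof (intro allI impI)
      fix u assume u: "0 \<le> u \<and> u \<le> \<gamma> \<and> u \<le> real (Suc m) * \<delta>"
      define u' where "u' = max 0 (u - \<delta>)"
      have u': "0 \<le> u'" "u' \<le> \<gamma>" "u' \<le> real m * \<delta>" "u' \<le> u" "u - u' \<le> \<delta>"
        using u \<delta>0 \<gamma> by (auto simp: u'_def algebra_simps)
      have N': "nonneg n (Nv n s u')" using Suc.IH u' by blast
      show "nonneg n (Nv n s u)"
      proof (rule N_step[OF s u'(4) gpos[OF u'(1,2)] gpos N'])
        show "0 \<le> u" "u \<le> \<gamma>" using u by auto
        fix j assume j: "j < n"
        have cs0: "0 \<le> (\<Sum>l<n. (Sm n s * Nv n s u')$$(l,j))"
          using N' s j by (intro sum_nonneg) (auto simp: nonneg_def intro!: sum_nonneg)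
        have "(u - u') * (\<Sum>l<n. (Sm n s * Nv n s u')$$(l,j)) \<le> \<delta> * (K * smax)"
          using u'(4,5) colsum[OF u'(1,2) j] cs0 \<delta>0 by (intro mult_mono) auto
        also have "\<dots> < 1"
        proof -
          have pos: "0 < K * smax + 1" using Ks by simp
          have "\<delta> * (K * smax) = (K * smax) / (K * smax + 1)" by (simp add: \<delta>_def)
          also have "\<dots> < 1" using pos by (simp add: divide_less_eq)
          finally show ?thesis .
        qed
        finally show "(u - u') * (\<Sum>l<n. (Sm n s * Nv n s u')$$(l,j)) < 1" .
      qed
    qed
  qed
  obtain m where m: "v / \<delta> \<le> real m" by (meson real_arch_simple)
  hence "v \<le> real m * \<delta>" using \<delta>0 by (simp add: pos_divide_le_eq)
  thus ?thesis using main v by blast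
qed



declare index_mult_mat(1)[simp del]

fun spow :: "nat \<Rightarrow> (nat\<Rightarrow>nat\<Rightarrow>real) \<Rightarrow> nat \<Rightarrow> nat \<Rightarrow> nat \<Rightarrow> real" where
  "spow n s 0 i j = (if i = j then 1 else 0)"
| "spow n s (Suc l) i j = (\<Sum>m<n. spow n s l i m * s m j)"

definition Tr :: "nat \<Rightarrow> (nat\<Rightarrow>nat\<Rightarrow>real) \<Rightarrow> nat \<Rightarrow> real" where
  "Tr n s l = (\<Sum>i<n. spow n s l i i)"

lemma spow_nonneg:
  assumes "\<And>i j. i<n \<Longrightarrow> j<n \<Longrightarrow> 0 \<le> s i j" "i < n" "j < n"
  shows "0 \<le> spow n s l i j"
  using assms(2,3) by (induction l arbitrary: j) (auto intro!: sum_nonneg mult_nonneg_nonneg assms(1))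

context
  fixes n :: nat and s :: "nat \<Rightarrow> nat \<Rightarrow> real" and \<gamma> c :: real
  assumes s: "\<And>i j. i<n \<Longrightarrow> j<n \<Longrightarrow> 0 \<le> s i j" and \<gamma>: "0 < \<gamma>"
    and c: "\<And>v. 0 \<le> v \<Longrightarrow> v \<le> \<gamma> \<Longrightarrow> c \<le> gd n s v" and c0: "0 < c"
begin

lemma gpos: "0 \<le> v \<Longrightarrow> v \<le> \<gamma> \<Longrightarrow> 0 < gd n s v" using c c0 by (meson less_le_trans)

lemma Nn: "0 \<le> v \<Longrightarrow> v \<le> \<gamma> \<Longrightarrow> nonneg n (Nv n s v)"
  by (rule N_nonneg[OF s _ c c0]) (use \<gamma> in auto)

definition tau where "tau v = trm (Nv n s v * Sm n s)"

lemma tau_eq: "tau v = (\<Sum>a<n. \<Sum>l<n. Nv n s v $$ (a,l) * s l a)"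
  unfolding tau_def trm_def by (intro sum.cong refl) auto

lemma tau_nonneg: "0 \<le> v \<Longrightarrow> v \<le> \<gamma> \<Longrightarrow> 0 \<le> tau v"
  unfolding tau_eq using Nn s by (auto simp: nonneg_def intro!: sum_nonneg)

lemma N_mono:
  assumes "0 \<le> v" "v \<le> w" "w \<le> \<gamma>" "a < n" "b < n"
  shows "Nv n s v $$ (a,b) \<le> Nv n s w $$ (a,b)"
proof -
  have gv: "gd n s v \<noteq> 0" and gw: "gd n s w \<noteq> 0" using gpos[of v] gpos[of w] assms by fastforce+
  have "Nv n s w $$ (a,b) = (Nv n s v + (w - v) \<cdot>\<^sub>m (Nv n s w * Sm n s * Nv n s v)) $$ (a,b)"
    using resolvent[OF gv gw] by simp
  also have "\<dots> = Nv n s v $$ (a,b) + (w - v) * (Nv n s w * Sm n s * Nv n s v) $$ (a,b)"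
    using assms by simp
  finally have eq: "Nv n s w $$ (a,b) = Nv n s v $$ (a,b) + (w - v) * (Nv n s w * Sm n s * Nv n s v) $$ (a,b)" .
  have "0 \<le> (Nv n s w * Sm n s * Nv n s v) $$ (a,b)"
    using assms Nn[of v] Nn[of w] s by (auto simp: nonneg_def intro!: sum_nonneg mult_nonneg_nonneg)
  thus ?thesis using eq assms by simp
qed

lemma tau_mono: "0 \<le> v \<Longrightarrow> v \<le> w \<Longrightarrow> w \<le> \<gamma> \<Longrightarrow> tau v \<le> tau w"
  unfolding tau_eq using N_mono s by (intro sum_mono mult_right_mono) auto

definition phi where "phi v = - ln (gd n s v)"

lemma phi_deriv: "0 \<le> v \<Longrightarrow> v \<le> \<gamma> \<Longrightarrow> (phi has_real_derivative tau v) (at v)"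
proof -
  assume v: "0 \<le> v" "v \<le> \<gamma>"
  have g: "0 < gd n s v" using gpos v .
  have d: "(gd n s has_real_derivative (- gd n s v * tau v)) (at v)"
    unfolding tau_def using gd_deriv g by simp
  have "((\<lambda>x. ln (gd n s x)) has_real_derivative inverse (gd n s v) * (- gd n s v * tau v)) (at v)"
    by (rule DERIV_chain2[OF DERIV_ln[OF g] d])
  hence D: "(phi has_real_derivative - (inverse (gd n s v) * (- gd n s v * tau v))) (at v)"
    unfolding phi_def by (rule DERIV_minus)
  have eq: "- (inverse (gd n s v) * (- gd n s v * tau v)) = tau v" using g by (simp add: field_simps)
  show ?thesis using D by (simp only: eq)
qed

lemma tau_bound: "tau (\<gamma>/2) \<le> (2/\<gamma>) * (- ln c)"
proof -
  obtain z where z: "\<gamma>/2 < z" "z < \<gamma>" "phi \<gamma> - phi (\<gamma>/2) = (\<gamma> - \<gamma>/2) * tau z"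
    using MVT2[of "\<gamma>/2" \<gamma> phi tau] phi_deriv \<gamma> by auto
  obtain z' where z': "0 < z'" "z' < \<gamma>/2" "phi (\<gamma>/2) - phi 0 = (\<gamma>/2 - 0) * tau z'"
    using MVT2[of 0 "\<gamma>/2" phi tau] phi_deriv \<gamma> by auto
  have M0: "Mv n s 0 = 1\<^sub>m n" by (rule eq_matI) (auto simp: Mv_def)
  have phi0: "phi 0 = 0" by (simp add: phi_def gd_def M0)
  have "0 \<le> tau z'" using z' by (intro tau_nonneg) auto
  hence "0 \<le> (\<gamma>/2 - 0) * tau z'" using \<gamma> by simp
  hence p1: "0 \<le> phi (\<gamma>/2)" using z'(3) phi0 by linarith
  have "tau (\<gamma>/2) \<le> tau z" using z \<gamma> by (intro tau_mono) auto
  hence "(\<gamma>/2) * tau (\<gamma>/2) \<le> phi \<gamma> - phi (\<gamma>/2)" using z \<gamma> by simp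
  also have "\<dots> \<le> phi \<gamma>" using p1 by simp
  also have "\<dots> \<le> - ln c" unfolding phi_def using c[of \<gamma>] c0 \<gamma> by simp
  finally have "(\<gamma>/2) * tau (\<gamma>/2) \<le> - ln c" .
  thus ?thesis using \<gamma> by (simp add: field_simps)
qed

lemma trace_bound: "(\<gamma>/2)^j * Tr n s (Suc j) \<le> (2/\<gamma>) * (- ln c)"
proof -
  define t where "t = \<gamma>/2"
  define N where "N = Nv n s t"
  have t: "0 < t" "t \<le> \<gamma>" using \<gamma> by (auto simp: t_def)
  have g: "gd n s t \<noteq> 0" using gpos[of t] t by fastforce
  have Nn': "0 \<le> N $$ (a,b)" if "a < n" "b < n" for a b using Nn[of t] t that by (auto simp: N_def nonneg_def)
  have Neq: "N $$ (a,b) = (if a = b then 1 else 0) + t * (\<Sum>l<n. s a l * N $$ (l,b))"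
    if ab: "a < n" "b < n" for a b
  proof -
    have "1\<^sub>m n $$ (a,b) = (Mv n s t * N) $$ (a,b)" using Nv_inv(1)[OF g] by (simp add: N_def)
    also have "\<dots> = (\<Sum>l<n. ((if a = l then 1 else 0) - t * s a l) * N $$ (l,b))"
      using ab by (simp add: N_def)
    also have "\<dots> = (\<Sum>l<n. (if a = l then 1 else 0) * N $$ (l,b)) - t * (\<Sum>l<n. s a l * N $$ (l,b))"
      by (simp add: left_diff_distrib sum_subtractf sum_distrib_left mult.assoc)
    also have "(\<Sum>l<n. (if a = l then 1 else 0) * N $$ (l,b)) = (\<Sum>l<n. if a = l then N $$ (l,b) else 0)"
      by (intro sum.cong) auto
    also have "\<dots> = N $$ (a,b)" using ab by simp
    finally show ?thesis using ab by simp
  qed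
  have G: "t^j * (\<Sum>l<n. spow n s j a l * N $$ (l,b)) \<le> N $$ (a,b)" if "a < n" "b < n" for a b
    using that
  proof (induction j arbitrary: a)
    case 0
    have "(\<Sum>l<n. spow n s 0 a l * N $$ (l,b)) = (\<Sum>l<n. if a = l then N $$ (l,b) else 0)"
      by (intro sum.cong) auto
    thus ?case using 0 by simp
  next
    case (Suc j)
    have "t^Suc j * (\<Sum>l<n. spow n s (Suc j) a l * N $$ (l,b))
        = t^j * (\<Sum>m<n. spow n s j a m * (t * (\<Sum>l<n. s m l * N $$ (l,b))))"
    proof -
      have "(\<Sum>l<n. (\<Sum>m<n. spow n s j a m * s m l) * N $$ (l,b)) = (\<Sum>m<n. spow n s j a m * (\<Sum>l<n. s m l * N $$ (l,b)))"
        by (simp add: sum_distrib_left sum_distrib_right mult.assoc) (rule sum.swap)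
      thus ?thesis by (simp add: sum_distrib_left mult_ac)
    qed
    also have "\<dots> \<le> t^j * (\<Sum>m<n. spow n s j a m * N $$ (m,b))"
    proof (rule mult_left_mono[OF sum_mono])
      fix m assume m: "m \<in> {..<n}"
      have "t * (\<Sum>l<n. s m l * N $$ (l,b)) \<le> N $$ (m,b)"
        using Neq[of m b] m Suc.prems by auto
      thus "spow n s j a m * (t * (\<Sum>l<n. s m l * N $$ (l,b))) \<le> spow n s j a m * N $$ (m,b)"
        using spow_nonneg[OF s] m Suc.prems by (intro mult_left_mono) auto
    qed (use t in auto)
    also have "\<dots> \<le> N $$ (a,b)" using Suc by blast
    finally show ?case .
  qed
  have NI: "(if l = b then 1 else 0) \<le> N $$ (l,b)" if "l < n" "b < n" for l b
    using Neq[OF that] that t Nn' s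
    by (auto intro!: mult_nonneg_nonneg sum_nonneg)
  have Nge: "t^j * spow n s j a b \<le> N $$ (a,b)" if ab: "a < n" "b < n" for a b
  proof -
    have "(\<Sum>l<n. spow n s j a l * (if l = b then 1 else 0)) = (\<Sum>l<n. if b = l then spow n s j a l else 0)"
      by (intro sum.cong) auto
    hence "spow n s j a b = (\<Sum>l<n. spow n s j a l * (if l = b then 1 else 0))"
      using ab by simp
    also have "\<dots> \<le> (\<Sum>l<n. spow n s j a l * N $$ (l,b))"
      using NI ab spow_nonneg[OF s] by (intro sum_mono mult_left_mono) auto
    finally have "t^j * spow n s j a b \<le> t^j * (\<Sum>l<n. spow n s j a l * N $$ (l,b))"
      using t by (intro mult_left_mono) auto
    also have "\<dots> \<le> N $$ (a,b)" using G[OF ab] .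
    finally show ?thesis .
  qed
  have "t^j * Tr n s (Suc j) = (\<Sum>a<n. \<Sum>l<n. (t^j * spow n s j a l) * s l a)"
    by (simp add: Tr_def sum_distrib_left mult_ac)
  also have "\<dots> \<le> (\<Sum>a<n. \<Sum>l<n. N $$ (a,l) * s l a)"
    using Nge s by (intro sum_mono mult_right_mono) auto
  also have "\<dots> = tau t" by (simp add: tau_eq N_def)
  also have "\<dots> \<le> (2/\<gamma>) * (- ln c)" using tau_bound by (simp add: t_def)
  finally show ?thesis by (simp add: t_def)
qed

end



definition Fset :: "nat \<Rightarrow> nat \<Rightarrow> (nat set \<times> (nat \<Rightarrow> nat)) set" where
  "Fset n k = (SIGMA I:{I. I \<subseteq> {..<n} \<and> card I = k}. {p. p permutes I})"

definition wt :: "(nat\<Rightarrow>nat\<Rightarrow>real) \<Rightarrow> nat set \<Rightarrow> (nat \<Rightarrow> nat) \<Rightarrow> real" where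
  "wt s I p = (\<Prod>i\<in>I. s i (p i))"

definition Q :: "nat \<Rightarrow> (nat\<Rightarrow>nat\<Rightarrow>real) \<Rightarrow> nat \<Rightarrow> real" where
  "Q n s k = (\<Sum>(I,p)\<in>Fset n k. wt s I p)"

definition cw :: "(nat\<Rightarrow>nat\<Rightarrow>real) \<Rightarrow> nat \<Rightarrow> (nat \<Rightarrow> nat) \<Rightarrow> real" where
  "cw s l c = (\<Prod>a<l. s (c a) (c (Suc a mod l)))"

lemma finite_Fset: "finite (Fset n k)"
  unfolding Fset_def
  by (rule finite_SigmaI) (auto intro: finite_subset[of _ "Pow {..<n}"] finite_permutations finite_subset[of _ "{..<n}"])

lemma wt_nonneg: "(\<And>i j. i<n \<Longrightarrow> j<n \<Longrightarrow> 0 \<le> s i j) \<Longrightarrow> (I,p) \<in> Fset n k \<Longrightarrow> 0 \<le> wt s I p"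
  unfolding wt_def Fset_def by (auto intro!: prod_nonneg dest: permutes_in_image)

lemma Q_nonneg: "(\<And>i j. i<n \<Longrightarrow> j<n \<Longrightarrow> 0 \<le> s i j) \<Longrightarrow> 0 \<le> Q n s k"
  unfolding Q_def by (intro sum_nonneg) (auto intro: wt_nonneg)

lemma sum_delta_mult: "i < (n::nat) \<Longrightarrow> (\<Sum>m<n. (if i = m then 1 else 0) * f m) = (f i :: real)"
proof -
  assume i: "i < n"
  have "(\<Sum>m<n. (if i = m then 1 else 0) * f m) = (\<Sum>m\<in>{..<n}. if m = i then f m else 0)"
    by (intro sum.cong) auto
  also have "\<dots> = f i" using i by (subst sum.delta) auto
  finally show ?thesis .
qed

lemma walk:
  assumes "0 < l" "i < n"
  shows "(\<Sum>c\<in>{c\<in>PiE {..<l} (\<lambda>_. {..<n}). c 0 = i}. \<Prod>a<l. s (c a) (if Suc a < l then c (Suc a) else j))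
         = spow n s l i j"
  using assms
proof (induction l arbitrary: j)
  case 0 thus ?case by simp
next
  case (Suc l)
  show ?case
  proof (cases "l = 0")
    case True
    have "{c\<in>PiE {..<Suc 0} (\<lambda>_. {..<n}). c 0 = i} = {restrict (\<lambda>_. i) {..<Suc 0}}"
      using Suc.prems by (auto simp: PiE_def extensional_def fun_eq_iff)
    thus ?thesis using True Suc.prems by (simp add: sum_delta_mult)
  next
    case False
    define A where "A l' = {c\<in>PiE {..<l'} (\<lambda>_. {..<n}). c 0 = i}" for l' :: nat
    define P where "P c m = (\<Prod>a<l. s (c a) (if Suc a < l then c (Suc a) else m))" for c m
    have "(\<Sum>(c,m)\<in>A l \<times> {..<n}. P c m * s m j) =
        (\<Sum>c\<in>A (Suc l). \<Prod>a<Suc l. s (c a) (if Suc a < Suc l then c (Suc a) else j))"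
    proof (rule sum.reindex_bij_witness[of _ "\<lambda>c. (restrict c {..<l}, c l)" "\<lambda>(c,m). c(l := m)"])
      fix cm assume cm: "cm \<in> A l \<times> {..<n}"
      obtain c m where [simp]: "cm = (c,m)" by (cases cm)
      have c: "c \<in> PiE {..<l} (\<lambda>_. {..<n})" "c 0 = i" "m < n" using cm by (auto simp: A_def)
      show "(case cm of (c, m) \<Rightarrow> c(l := m)) \<in> A (Suc l)"
        using c False by (auto simp: A_def PiE_def extensional_def Pi_def)
      show "(restrict (case cm of (c, m) \<Rightarrow> c(l := m)) {..<l}, (case cm of (c, m) \<Rightarrow> c(l := m)) l) = cm"
        using c by (auto simp: PiE_def extensional_def fun_eq_iff)
      have "(\<Prod>a<Suc l. s ((c(l:=m)) a) (if Suc a < Suc l then (c(l:=m)) (Suc a) else j))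
          = (\<Prod>a<l. s ((c(l:=m)) a) (if Suc a < Suc l then (c(l:=m)) (Suc a) else j)) * s m j"
        by (simp add: prod.lessThan_Suc)
      also have "(\<Prod>a<l. s ((c(l:=m)) a) (if Suc a < Suc l then (c(l:=m)) (Suc a) else j)) = P c m"
        unfolding P_def by (intro prod.cong) auto
      finally show "(\<Prod>a<Suc l. s ((case cm of (c, m) \<Rightarrow> c(l := m)) a)
              (if Suc a < Suc l then (case cm of (c, m) \<Rightarrow> c(l := m)) (Suc a) else j)) =
             (case cm of (c, m) \<Rightarrow> P c m * s m j)" by simp
    next
      fix c assume c: "c \<in> A (Suc l)"
      show "(restrict c {..<l}, c l) \<in> A l \<times> {..<n}"
        using c False by (auto simp: A_def PiE_def extensional_def Pi_def)
      show "(case (restrict c {..<l}, c l) of (c, m) \<Rightarrow> c(l := m)) = c"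
        using c by (auto simp: A_def PiE_def extensional_def fun_eq_iff)
    qed
    hence "(\<Sum>c\<in>A (Suc l). \<Prod>a<Suc l. s (c a) (if Suc a < Suc l then c (Suc a) else j))
        = (\<Sum>(c,m)\<in>A l \<times> {..<n}. P c m * s m j)" by simp
    also have "\<dots> = (\<Sum>m<n. (\<Sum>c\<in>A l. P c m) * s m j)"
      by (simp add: sum.cartesian_product[symmetric] sum_distrib_right sum.swap[of _ "A l"])
    also have "\<dots> = (\<Sum>m<n. spow n s l i m * s m j)"
      using Suc.IH False Suc.prems by (simp add: A_def P_def)
    finally show ?thesis by (simp add: A_def)
  qed
qed

lemma cycle_trace:
  assumes "0 < l"
  shows "(\<Sum>c\<in>PiE {..<l} (\<lambda>_. {..<n}). cw s l c) = Tr n s l"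
proof -
  have fin: "finite (PiE {..<l} (\<lambda>_. {..<n}))" by (simp add: finite_PiE)
  have "(\<Sum>c\<in>PiE {..<l} (\<lambda>_. {..<n}). cw s l c)
      = (\<Sum>i<n. \<Sum>c\<in>{c\<in>PiE {..<l} (\<lambda>_. {..<n}). c 0 = i}. cw s l c)"
    using assms by (intro sum.group[symmetric] fin) (auto simp: PiE_def Pi_def)
  also have "\<dots> = (\<Sum>i<n. spow n s l i i)"
  proof (intro sum.cong refl)
    fix i assume i: "i \<in> {..<n}"
    have "(\<Sum>c\<in>{c\<in>PiE {..<l} (\<lambda>_. {..<n}). c 0 = i}. cw s l c)
        = (\<Sum>c\<in>{c\<in>PiE {..<l} (\<lambda>_. {..<n}). c 0 = i}. \<Prod>a<l. s (c a) (if Suc a < l then c (Suc a) else i))"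
    proof (intro sum.cong refl)
      fix c assume c: "c \<in> {c\<in>PiE {..<l} (\<lambda>_. {..<n}). c 0 = i}"
      show "cw s l c = (\<Prod>a<l. s (c a) (if Suc a < l then c (Suc a) else i))"
        unfolding cw_def
      proof (intro prod.cong refl)
        fix a assume a: "a \<in> {..<l}"
        have "Suc a = l \<or> Suc a < l" using a by auto
        hence "Suc a mod l = (if Suc a < l then Suc a else 0)" by auto
        thus "s (c a) (c (Suc a mod l)) = s (c a) (if Suc a < l then c (Suc a) else i)"
          using c by auto
      qed
    qed
    also have "\<dots> = spow n s l i i" using walk[OF assms] i by simp
    finally show "(\<Sum>c\<in>{c\<in>PiE {..<l} (\<lambda>_. {..<n}). c 0 = i}. cw s l c) = spow n s l i i" .
  qed
  finally show ?thesis by (simp add: Tr_def)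
qed

definition cL :: "(nat \<Rightarrow> nat) \<Rightarrow> nat set \<Rightarrow> nat" where
  "cL p I = funpow_dist1 p (Min I) (Min I)"
definition cO :: "(nat \<Rightarrow> nat) \<Rightarrow> nat set \<Rightarrow> nat set" where
  "cO p I = orbit p (Min I)"

lemma cyc_facts:
  assumes Ip: "(I,p) \<in> Fset n k" and k: "0 < k"
  shows "finite I" "Min I \<in> I" "0 < cL p I" "cO p I = (\<lambda>a. (p^^a) (Min I)) ` {..<cL p I}"
    "inj_on (\<lambda>a. (p^^a) (Min I)) {..<cL p I}" "cO p I \<subseteq> I" "card (cO p I) = cL p I" "cL p I \<le> k"
    "perm_restrict p (I - cO p I) permutes (I - cO p I)" "card (I - cO p I) = k - cL p I"
    "I - cO p I \<subseteq> {..<n}" "I \<subseteq> {..<n}" "p permutes I"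
    "\<And>a. a < cL p I \<Longrightarrow> p ((p^^a) (Min I)) = (p^^(Suc a mod cL p I)) (Min I)"
proof -
  have I: "I \<subseteq> {..<n}" "card I = k" and pI: "p permutes I" using Ip by (auto simp: Fset_def)
  show fin: "finite I" using I(1) finite_subset by blast
  have ne: "I \<noteq> {}" using I(2) k by auto
  show i0: "Min I \<in> I" using fin ne by (rule Min_in)
  have perm: "permutation p" unfolding permutation_permutes using fin pI by blast
  have self: "Min I \<in> orbit p (Min I)" by (rule permutation_self_in_orbit[OF perm])
  show "0 < cL p I" by (simp add: cL_def)
  show O: "cO p I = (\<lambda>a. (p^^a) (Min I)) ` {..<cL p I}"
    unfolding cO_def cL_def orbit_conv_funpow_dist1[OF self] by (simp add: atLeast0LessThan)
  show inj: "inj_on (\<lambda>a. (p^^a) (Min I)) {..<cL p I}"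
    using inj_on_funpow_dist1[OF self] by (simp add: cL_def atLeast0LessThan)
  have pL: "(p^^cL p I) (Min I) = Min I" unfolding cL_def by (rule funpow_dist1_prop[OF self])
  show sub: "cO p I \<subseteq> I" unfolding cO_def by (rule permutes_orbit_subset[OF pI i0])
  show cO: "card (cO p I) = cL p I" using O inj by (simp add: card_image)
  show "cL p I \<le> k" using card_mono[OF fin sub] cO I(2) by simp
  have cyc: "cyclic_on p (cO p I)" unfolding cO_def by (rule cyclic_on_orbit'[OF perm])
  show "perm_restrict p (I - cO p I) permutes (I - cO p I)" by (rule perm_restrict_diff_cyclic[OF pI cyc])
  show "card (I - cO p I) = k - cL p I"
    using card_Diff_subset[OF finite_subset[OF sub fin] sub] cO I(2) by simp
  show "I - cO p I \<subseteq> {..<n}" using I(1) by blast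
  show "I \<subseteq> {..<n}" by (rule I(1))
  show "p permutes I" by (rule pI)
  fix a assume a: "a < cL p I"
  have "p ((p^^a) (Min I)) = (p^^Suc a) (Min I)" by simp
  also have "\<dots> = (p^^(Suc a mod cL p I)) (Min I)"
  proof (cases "Suc a < cL p I")
    case True thus ?thesis by simp
  next
    case False
    hence "Suc a = cL p I" using a by simp
    thus ?thesis using pL by simp
  qed
  finally show "p ((p^^a) (Min I)) = (p^^(Suc a mod cL p I)) (Min I)" .
qed

definition Phi :: "nat set \<times> (nat \<Rightarrow> nat) \<Rightarrow> nat \<times> (nat \<Rightarrow> nat) \<times> nat set \<times> (nat \<Rightarrow> nat)" where
  "Phi = (\<lambda>(I, p). (cL p I, restrict (\<lambda>a. (p^^a) (Min I)) {..<cL p I}, I - cO p I, perm_restrict p (I - cO p I)))"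

lemma cw_nonneg:
  assumes s: "\<And>i j. i<n \<Longrightarrow> j<n \<Longrightarrow> 0 \<le> s i j" and l: "0 < l" and c: "c \<in> PiE {..<l} (\<lambda>_. {..<n})"
  shows "0 \<le> cw s l c"
  unfolding cw_def
proof (intro prod_nonneg ballI s)
  fix a assume "a \<in> {..<l}"
  moreover have "Suc a mod l < l" using l by simp
  ultimately show "c a < n" "c (Suc a mod l) < n" using c by (auto simp: PiE_def Pi_def)
qed

lemma Q_rec:
  assumes s: "\<And>i j. i<n \<Longrightarrow> j<n \<Longrightarrow> 0 \<le> s i j" and k: "0 < k"
  shows "Q n s k \<le> (\<Sum>l\<in>{1..k}. Tr n s l * Q n s (k - l))"
proof -
  define G where "G = (SIGMA l:{1..k}. PiE {..<l} (\<lambda>_. {..<n}) \<times> Fset n (k - l))"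
  define gw where "gw = (\<lambda>(l, c, I', p'). cw s l c * wt s I' p')"
  have finG: "finite G" unfolding G_def
    by (intro finite_SigmaI finite_cartesian_product finite_PiE finite_Fset) auto
  have maps: "Phi ` Fset n k \<subseteq> G"
  proof
    fix y assume "y \<in> Phi ` Fset n k"
    then obtain I p where Ip: "(I,p) \<in> Fset n k" and y: "y = Phi (I,p)" by auto
    note F = cyc_facts[OF Ip k]
    have "restrict (\<lambda>a. (p^^a) (Min I)) {..<cL p I} \<in> PiE {..<cL p I} (\<lambda>_. {..<n})"
      using F(4,6,12) by (auto simp: PiE_def Pi_def)
    moreover have "(I - cO p I, perm_restrict p (I - cO p I)) \<in> Fset n (k - cL p I)"
      using F(9,10,11) by (auto simp: Fset_def)
    ultimately show "y \<in> G" using F(3,8) by (auto simp: G_def y Phi_def)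
  qed
  have inj: "inj_on Phi (Fset n k)"
  proof (rule inj_onI)
    fix x1 x2 assume x1: "x1 \<in> Fset n k" and x2: "x2 \<in> Fset n k" and eq: "Phi x1 = Phi x2"
    obtain I1 p1 where [simp]: "x1 = (I1,p1)" by (cases x1)
    obtain I2 p2 where [simp]: "x2 = (I2,p2)" by (cases x2)
    note F1 = cyc_facts[OF x1[simplified] k] and F2 = cyc_facts[OF x2[simplified] k]
    define L where "L = cL p1 I1"
    define c where "c = restrict (\<lambda>a. (p1^^a) (Min I1)) {..<L}"
    have L2: "cL p2 I2 = L" and c2: "restrict (\<lambda>a. (p2^^a) (Min I2)) {..<L} = c"
      and I'2: "I2 - cO p2 I2 = I1 - cO p1 I1"
      and p'2: "perm_restrict p2 (I2 - cO p2 I2) = perm_restrict p1 (I1 - cO p1 I1)"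
      using eq by (auto simp: Phi_def L_def c_def)
    have O1: "cO p1 I1 = c ` {..<L}" using F1(4) by (simp add: c_def L_def)
    have O2: "cO p2 I2 = c ` {..<L}" using F2(4) L2 c2[symmetric] by (auto simp: image_def)
    have OO: "cO p1 I1 = cO p2 I2" using O1 O2 by simp
    have II: "I1 = I2" using F1(6) F2(6) I'2 OO by blast
    have "p1 x = p2 x" for x
    proof (cases "x \<in> I1")
      case False
      thus ?thesis using II F1(13) F2(13) by (simp add: permutes_not_in)
    next
      case xI: True
      show ?thesis
      proof (cases "x \<in> cO p1 I1")
        case False
        hence "p1 x = perm_restrict p1 (I1 - cO p1 I1) x" using xI by (simp add: perm_restrict_simps)
        also have "\<dots> = perm_restrict p2 (I2 - cO p2 I2) x" using p'2 by simp
        also have "\<dots> = p2 x" using False xI II OO by (simp add: perm_restrict_simps)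
        finally show ?thesis .
      next
        case True
        then obtain a where a: "a < L" "x = c a" using O1 by auto
        have "p1 x = (p1^^(Suc a mod L)) (Min I1)" using F1(14)[of a] a by (simp add: c_def L_def)
        also have "\<dots> = c (Suc a mod L)" using a by (simp add: c_def)
        also have "\<dots> = (p2^^(Suc a mod L)) (Min I2)" using a c2[symmetric] by simp
        also have "\<dots> = p2 ((p2^^a) (Min I2))" using F2(14)[of a] a L2 by simp
        also have "(p2^^a) (Min I2) = x" using a c2[symmetric] by simp
        finally show ?thesis .
      qed
    qed
    thus "x1 = x2" using II by (auto simp: fun_eq_iff)
  qed
  have wteq: "gw (Phi (I,p)) = wt s I p" if Ip: "(I,p) \<in> Fset n k" for I p
  proof -
    note F = cyc_facts[OF Ip k]
    define L where "L = cL p I"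
    define c where "c = restrict (\<lambda>a. (p^^a) (Min I)) {..<L}"
    have "wt s I p = (\<Prod>i\<in>I - cO p I. s i (p i)) * (\<Prod>i\<in>cO p I. s i (p i))"
      unfolding wt_def by (rule prod.subset_diff[OF F(6) F(1)])
    also have "(\<Prod>i\<in>I - cO p I. s i (p i)) = wt s (I - cO p I) (perm_restrict p (I - cO p I))"
      unfolding wt_def by (intro prod.cong refl) (simp add: perm_restrict_simps)
    also have "(\<Prod>i\<in>cO p I. s i (p i)) = (\<Prod>a<L. s ((p^^a) (Min I)) (p ((p^^a) (Min I))))"
      unfolding F(4) L_def by (rule prod.reindex[OF F(5), unfolded comp_def])
    also have "\<dots> = cw s L c"
      unfolding cw_def c_def L_def using F(14) F(3) by (intro prod.cong refl) auto
    finally show ?thesis by (simp add: gw_def Phi_def L_def c_def)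
  qed
  have "Q n s k = (\<Sum>x\<in>Fset n k. gw (Phi x))"
    unfolding Q_def by (intro sum.cong refl) (auto simp: wteq)
  also have "\<dots> = (\<Sum>y\<in>Phi ` Fset n k. gw y)" by (simp add: sum.reindex[OF inj])
  also have "\<dots> \<le> (\<Sum>y\<in>G. gw y)"
  proof (rule sum_mono2[OF finG maps])
    fix y assume "y \<in> G - Phi ` Fset n k"
    hence y: "y \<in> G" by simp
    then obtain l c I' p' where yy: "y = (l, c, I', p')" "l \<in> {1..k}" "c \<in> PiE {..<l} (\<lambda>_. {..<n})"
      "(I',p') \<in> Fset n (k - l)" by (auto simp: G_def)
    have "0 \<le> cw s l c" using cw_nonneg[OF s _ yy(3)] yy(2) by simp
    moreover have "0 \<le> wt s I' p'" using wt_nonneg[OF s yy(4)] .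
    ultimately show "0 \<le> gw y" by (simp add: gw_def yy(1))
  qed
  also have "\<dots> = (\<Sum>l\<in>{1..k}. \<Sum>z\<in>PiE {..<l} (\<lambda>_. {..<n}) \<times> Fset n (k - l). gw (l, z))"
    unfolding G_def by (subst sum.Sigma) (auto intro: finite_cartesian_product finite_PiE finite_Fset)
  also have "\<dots> = (\<Sum>l\<in>{1..k}. Tr n s l * Q n s (k - l))"
  proof (intro sum.cong refl)
    fix l assume l: "l \<in> {1..k}"
    have "(\<Sum>z\<in>PiE {..<l} (\<lambda>_. {..<n}) \<times> Fset n (k - l). gw (l, z))
        = (\<Sum>c\<in>PiE {..<l} (\<lambda>_. {..<n}). \<Sum>x\<in>Fset n (k - l). cw s l c * (case x of (I',p') \<Rightarrow> wt s I' p'))"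
      by (subst sum.cartesian_product) (auto simp: gw_def intro!: sum.cong)
    also have "\<dots> = (\<Sum>c\<in>PiE {..<l} (\<lambda>_. {..<n}). cw s l c) * Q n s (k - l)"
      by (simp add: Q_def sum_product)
    also have "\<dots> = Tr n s l * Q n s (k - l)" using l by (simp add: cycle_trace)
    finally show "(\<Sum>z\<in>PiE {..<l} (\<lambda>_. {..<n}) \<times> Fset n (k - l). gw (l, z)) = Tr n s l * Q n s (k - l)" .
  qed
  finally show ?thesis .
qed



lemma detI_gd: "detI {..<n} (\<lambda>i j. (if i = j then 1 else 0) - v * s i j) = gd n s v"
proof -
  have "gd n s v = (\<Sum>p\<in>{p. p permutes {..<n}}. of_int (sign p) * (\<Prod>i\<in>{..<n}. Mv n s v $$ (i, p i)))"
    unfolding gd_def det_def'[OF Mv_carrier] by (simp add: atLeast0LessThan)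
  also have "\<dots> = (\<Sum>p\<in>{p. p permutes {..<n}}. of_int (sign p) * (\<Prod>i\<in>{..<n}. (if i = p i then 1 else 0) - v * s i (p i)))"
  proof (rule sum.cong[OF refl])
    fix p assume p: "p \<in> {p. p permutes {..<n}}"
    have "(\<Prod>i\<in>{..<n}. Mv n s v $$ (i, p i)) = (\<Prod>i\<in>{..<n}. (if i = p i then 1 else 0) - v * s i (p i))"
    proof (rule prod.cong[OF refl])
      fix i assume i: "i \<in> {..<n}"
      hence "p i < n" using p permutes_in_image by fastforce
      thus "Mv n s v $$ (i, p i) = (if i = p i then 1 else 0) - v * s i (p i)" using i by simp
    qed
    thus "of_int (sign p) * (\<Prod>i\<in>{..<n}. Mv n s v $$ (i, p i)) = of_int (sign p) * (\<Prod>i\<in>{..<n}. (if i = p i then 1 else 0) - v * s i (p i))"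
      by simp
  qed
  finally show ?thesis by (simp add: detI_def)
qed

lemma Fset0: "Fset n 0 = {({}, id)}"
proof
  show "Fset n 0 \<subseteq> {({}, id)}"
  proof
    fix x assume "x \<in> Fset n 0"
    then obtain I p where x: "x = (I,p)" "I \<subseteq> {..<n}" "card I = 0" "p permutes I" by (auto simp: Fset_def)
    have "finite I" using x(2) finite_subset by blast
    hence "I = {}" using x(3) by simp
    thus "x \<in> {({}, id)}" using x by (simp add: permutes_empty)
  qed
  show "{({}, id)} \<subseteq> Fset n 0" by (auto simp: Fset_def permutes_id)
qed

lemma Q0: "Q n s 0 = 1" by (simp add: Q_def Fset0 wt_def)

lemma Tr_nonneg: "(\<And>i j. i<n \<Longrightarrow> j<n \<Longrightarrow> 0 \<le> s i j) \<Longrightarrow> 0 \<le> Tr n s l"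
  unfolding Tr_def by (intro sum_nonneg) (auto intro: spow_nonneg)

lemma Q_bounded:
  fixes S :: "nat \<Rightarrow> nat \<Rightarrow> nat \<Rightarrow> real"
  assumes Snonneg: "\<And>n i j. i < n \<Longrightarrow> j < n \<Longrightarrow> 0 \<le> S n i j"
    and A2: "assumption2 S"
  shows "\<exists>B. \<forall>n. Q n (S n) k \<le> B"
proof -
  define g where "g n v = detI {..<n} (\<lambda>i j. (if i = j then 1 else 0) - v * S n i j)" for n v
  have "liminf (\<lambda>n. ereal (Inf (g n ` {0..1 - 1/2}))) > 0"
    using A2 unfolding assumption2_def g_def by (drule_tac x="1/2" in spec) simp
  then obtain c where c: "0 < ereal c" "ereal c < liminf (\<lambda>n. ereal (Inf (g n ` {0..1/2})))"
    using ereal_dense2 by force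
  have "eventually (\<lambda>n. ereal c < ereal (Inf (g n ` {0..1/2}))) sequentially"
    by (rule less_LiminfD[OF c(2)])
  then obtain N where N: "\<And>n. n \<ge> N \<Longrightarrow> c < Inf (g n ` {0..1/2})"
    by (auto simp: eventually_sequentially)
  have c0: "0 < c" using c(1) by simp
  have gbound: "c \<le> gd n (S n) v" if n: "n \<ge> N" and v: "0 \<le> v" "v \<le> 1/2" for n v
  proof -
    have cont: "continuous_on {0..1/2} (g n)"
      unfolding g_def detI_def by (intro continuous_intros)
    have "compact (g n ` {0..1/2})" by (rule compact_continuous_image[OF cont compact_Icc])
    hence "bdd_below (g n ` {0..1/2})" by (intro bounded_imp_bdd_below compact_imp_bounded)
    hence "Inf (g n ` {0..1/2}) \<le> g n v" using v by (intro cInf_lower) auto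
    thus ?thesis using N[OF n] by (simp add: g_def detI_gd)
  qed
  define C where "C l = 4^(l-1) * (4 * (- ln c))" for l :: nat
  have TrB: "Tr n (S n) l \<le> C l" if n: "n \<ge> N" and l: "1 \<le> l" for n l
  proof -
    have "((1/2)/2)^(l-1) * Tr n (S n) (Suc (l-1)) \<le> (2/(1/2)) * (- ln c)"
      by (rule trace_bound[of n "S n" "1/2" c]) (use Snonneg gbound[OF n] c0 in auto)
    hence "(1/4)^(l-1) * Tr n (S n) l \<le> 4 * (- ln c)" using l by simp
    hence "4^(l-1) * ((1/4)^(l-1) * Tr n (S n) l) \<le> 4^(l-1) * (4 * (- ln c))"
      by (intro mult_left_mono) auto
    thus ?thesis by (simp add: C_def power_one_over mult.assoc[symmetric])
  qed
  have C0: "0 \<le> C l" if "1 \<le> l" for l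
    using TrB[of N l] Tr_nonneg[of N "S N" l] Snonneg that by fastforce
  have QB: "\<exists>R. \<forall>n\<ge>N. Q n (S n) k \<le> R" for k
  proof (induction k rule: less_induct)
    case (less k)
    show ?case
    proof (cases "k = 0")
      case True thus ?thesis by (auto simp: Q0)
    next
      case False
      hence k: "0 < k" by simp
      have "\<forall>j\<in>{..<k}. \<exists>R. \<forall>n\<ge>N. Q n (S n) j \<le> R" using less by blast
      from bchoice[OF this] obtain R where R0: "\<forall>j\<in>{..<k}. \<forall>n\<ge>N. Q n (S n) j \<le> R j" by blast
      hence R: "\<And>j n. j < k \<Longrightarrow> n \<ge> N \<Longrightarrow> Q n (S n) j \<le> R j" by blast
      show ?thesis
      proof (intro exI allI impI)
        fix n assume n: "N \<le> n"
        have "Q n (S n) k \<le> (\<Sum>l\<in>{1..k}. Tr n (S n) l * Q n (S n) (k - l))"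
          by (rule Q_rec[OF _ k]) (use Snonneg in auto)
        also have "\<dots> \<le> (\<Sum>l\<in>{1..k}. C l * R (k - l))"
        proof (intro sum_mono mult_mono)
          fix l assume l: "l \<in> {1..k}"
          show "Tr n (S n) l \<le> C l" using TrB[OF n] l by simp
          show "Q n (S n) (k - l) \<le> R (k - l)" using R[OF _ n] l by simp
          show "0 \<le> C l" using C0 l by simp
          show "0 \<le> Q n (S n) (k - l)" by (rule Q_nonneg) (use Snonneg in auto)
        qed
        finally show "Q n (S n) k \<le> (\<Sum>l\<in>{1..k}. C l * R (k - l))" .
      qed
    qed
  qed
  then obtain R where R: "\<And>n. n \<ge> N \<Longrightarrow> Q n (S n) k \<le> R" by blast
  define B where "B = max R (Max ((\<lambda>n. Q n (S n) k) ` {..<N}) )"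
  have "Q n (S n) k \<le> B" for n
  proof (cases "n \<ge> N")
    case True thus ?thesis using R unfolding B_def by fastforce
  next
    case False
    hence "Q n (S n) k \<le> Max ((\<lambda>n. Q n (S n) k) ` {..<N})" by (intro Max_ge) auto
    thus ?thesis unfolding B_def by linarith
  qed
  thus ?thesis by blast
qed



lemma cnj_meas[measurable]: "f \<in> borel_measurable M \<Longrightarrow> (\<lambda>x. cnj (f x :: complex)) \<in> borel_measurable M"
proof -
  assume f: "f \<in> borel_measurable M"
  have c: "(cnj :: complex \<Rightarrow> complex) \<in> borel_measurable borel"
    by (intro borel_measurable_continuous_onI continuous_intros)
  show ?thesis using measurable_compose[OF f c] by simp
qed

context
  fixes Pr :: "'s measure" and W :: "nat \<Rightarrow> nat \<Rightarrow> 's \<Rightarrow> complex"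
  assumes ps: "prob_space Pr"
    and meas: "\<And>i j. W i j \<in> borel_measurable Pr"
    and indep: "prob_space.indep_vars Pr (\<lambda>_. borel) (\<lambda>(i, j). W i j) UNIV"
    and ident: "\<And>i j. distr Pr borel (W i j) = distr Pr borel (W 0 0)"
    and int1: "integrable Pr (W 0 0)"
    and int2: "integrable Pr (\<lambda>\<omega>. (cmod (W 0 0 \<omega>))\<^sup>2)"
begin

interpretation prob_space Pr by (rule ps)

lemma transfer_int:
  assumes g: "g \<in> borel_measurable (borel :: complex measure)"
  shows "integral\<^sup>L Pr (\<lambda>\<omega>. g (W i j \<omega>)) = (integral\<^sup>L Pr (\<lambda>\<omega>. g (W 0 0 \<omega>)) :: complex)"
  using integral_distr[OF meas[of i j] g] integral_distr[OF meas[of 0 0] g] ident[of i j] by simp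

lemma transfer_integrable:
  assumes g: "g \<in> borel_measurable (borel :: complex measure)"
  shows "integrable Pr (\<lambda>\<omega>. g (W i j \<omega>)) \<longleftrightarrow> integrable Pr (\<lambda>\<omega>. (g (W 0 0 \<omega>) :: complex))"
  using integrable_distr_eq[OF meas[of i j] g] integrable_distr_eq[OF meas[of 0 0] g] ident[of i j] by simp

lemma int_lin:
  assumes a: "a \<in> borel_measurable borel" and ab: "\<And>z. cmod (a z) \<le> cmod z + M" and M: "0 \<le> M"
  shows "integrable Pr (\<lambda>\<omega>. a (W i j \<omega>))"
proof -
  have "integrable Pr (\<lambda>\<omega>. a (W 0 0 \<omega>))"
  proof (rule Bochner_Integration.integrable_bound[where f="\<lambda>\<omega>. cmod (W 0 0 \<omega>) + M"])
    show "integrable Pr (\<lambda>\<omega>. cmod (W 0 0 \<omega>) + M)" using int1 by auto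
    show "(\<lambda>\<omega>. a (W 0 0 \<omega>)) \<in> borel_measurable Pr" using a meas by measurable
    show "AE \<omega> in Pr. norm (a (W 0 0 \<omega>)) \<le> norm (cmod (W 0 0 \<omega>) + M)"
      using ab M by (auto intro!: AE_I2 order.trans[OF ab])
  qed
  thus ?thesis using transfer_integrable[OF a] by simp
qed

lemma int_quad:
  assumes a: "a \<in> borel_measurable borel" and ab: "\<And>z. cmod (a z) \<le> cmod z + M"
    and b: "b \<in> borel_measurable borel" and bb: "\<And>z. cmod (b z) \<le> cmod z + M" and M: "0 \<le> M"
  shows "integrable Pr (\<lambda>\<omega>. a (W i j \<omega>) * cnj (b (W i j \<omega>)))"
proof -
  have g: "(\<lambda>z. a z * cnj (b z)) \<in> borel_measurable borel" using a b by measurable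
  have "integrable Pr (\<lambda>\<omega>. a (W 0 0 \<omega>) * cnj (b (W 0 0 \<omega>)))"
  proof (rule Bochner_Integration.integrable_bound[where f="\<lambda>\<omega>. 2 * (cmod (W 0 0 \<omega>))\<^sup>2 + 2 * M\<^sup>2"])
    show "integrable Pr (\<lambda>\<omega>. 2 * (cmod (W 0 0 \<omega>))\<^sup>2 + 2 * M\<^sup>2)" using int2 by auto
    show "(\<lambda>\<omega>. a (W 0 0 \<omega>) * cnj (b (W 0 0 \<omega>))) \<in> borel_measurable Pr" using a b meas by measurable
    show "AE \<omega> in Pr. norm (a (W 0 0 \<omega>) * cnj (b (W 0 0 \<omega>))) \<le> norm (2 * (cmod (W 0 0 \<omega>))\<^sup>2 + 2 * M\<^sup>2)"
    proof (intro AE_I2)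
      fix \<omega>
      let ?z = "W 0 0 \<omega>"
      have "norm (a ?z * cnj (b ?z)) = cmod (a ?z) * cmod (b ?z)" by (simp add: norm_mult)
      also have "\<dots> \<le> (cmod ?z + M) * (cmod ?z + M)"
        by (rule mult_mono) (use ab bb M in \<open>auto intro: add_nonneg_nonneg\<close>)
      also have "\<dots> \<le> 2 * (cmod ?z)\<^sup>2 + 2 * M\<^sup>2"
      proof -
        have h: "0 \<le> (cmod ?z - M) * (cmod ?z - M)" by simp
        thus ?thesis unfolding power2_eq_square by (simp add: algebra_simps; linarith)
      qed
      also have "\<dots> \<le> norm (2 * (cmod ?z)\<^sup>2 + 2 * M\<^sup>2)" by simp
      finally show "norm (a ?z * cnj (b ?z)) \<le> norm (2 * (cmod ?z)\<^sup>2 + 2 * M\<^sup>2)" .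
    qed
  qed
  thus ?thesis using transfer_integrable[OF g] by simp
qed

lemma KL:
  assumes a: "a \<in> borel_measurable borel" and ab: "\<And>z. cmod (a z) \<le> cmod z + M"
    and b: "b \<in> borel_measurable borel" and bb: "\<And>z. cmod (b z) \<le> cmod z + M" and M: "0 \<le> M"
    and a0: "integral\<^sup>L Pr (\<lambda>\<omega>. a (W 0 0 \<omega>)) = 0" and b0: "integral\<^sup>L Pr (\<lambda>\<omega>. b (W 0 0 \<omega>)) = 0"
    and A: "finite A" and B: "finite B"
  shows "integrable Pr (\<lambda>\<omega>. (\<Prod>e\<in>A. a (W (fst e) (snd e) \<omega>)) * cnj (\<Prod>e\<in>B. b (W (fst e) (snd e) \<omega>)))"
    and "integral\<^sup>L Pr (\<lambda>\<omega>. (\<Prod>e\<in>A. a (W (fst e) (snd e) \<omega>)) * cnj (\<Prod>e\<in>B. b (W (fst e) (snd e) \<omega>)))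
         = (if A = B then (integral\<^sup>L Pr (\<lambda>\<omega>. a (W 0 0 \<omega>) * cnj (b (W 0 0 \<omega>)))) ^ card A else 0)"
proof -
  define g where "g e z = (if e \<in> A then a z else 1) * (if e \<in> B then cnj (b z) else 1)" for e and z :: complex
  have gm: "g e \<in> borel_measurable borel" for e
  proof -
    have "(\<lambda>z. a z * cnj (b z)) \<in> borel_measurable borel" "(\<lambda>z. a z * 1) \<in> borel_measurable borel"
      "(\<lambda>z. 1 * cnj (b z)) \<in> borel_measurable borel" "(\<lambda>z. (1::complex) * 1) \<in> borel_measurable borel"
      using a b by measurable
    thus ?thesis unfolding g_def by (cases "e \<in> A"; cases "e \<in> B") simp_all
  qed
  define Y where "Y e \<omega> = g e (W (fst e) (snd e) \<omega>)" for e \<omega>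
  have ind0: "indep_vars (\<lambda>_. borel) (\<lambda>e \<omega>. g e ((\<lambda>(i, j). W i j) e \<omega>)) UNIV"
    by (rule indep_vars_compose2[OF indep]) (simp add: gm)
  have ind: "indep_vars (\<lambda>_. borel) Y (A \<union> B)"
  proof -
    have Yeq: "Y = (\<lambda>e \<omega>. g e (W (fst e) (snd e) \<omega>))" by (simp add: Y_def fun_eq_iff)
    show ?thesis using indep_vars_subset[OF ind0, of "A \<union> B"] unfolding Yeq by (simp add: split_beta')
  qed
  have intY: "integrable Pr (Y e)" if e: "e \<in> A \<union> B" for e
  proof -
    obtain i j where [simp]: "e = (i,j)" by (cases e)
    have "integrable Pr (\<lambda>\<omega>. a (W i j \<omega>) * cnj (b (W i j \<omega>)))" by (rule int_quad[OF a ab b bb M])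
    moreover have "integrable Pr (\<lambda>\<omega>. a (W i j \<omega>))" by (rule int_lin[OF a ab M])
    moreover have "integrable Pr (\<lambda>\<omega>. cnj (b (W i j \<omega>)))" using int_lin[OF b bb M] by simp
    moreover have "Y e = (\<lambda>\<omega>. g e (W i j \<omega>))" by (simp add: Y_def fun_eq_iff)
    ultimately show ?thesis using e by (cases "e \<in> A"; cases "e \<in> B") (auto simp: g_def)
  qed
  have fin: "finite (A \<union> B)" using A B by simp
  have prodeq: "(\<Prod>e\<in>A \<union> B. Y e \<omega>) = (\<Prod>e\<in>A. a (W (fst e) (snd e) \<omega>)) * cnj (\<Prod>e\<in>B. b (W (fst e) (snd e) \<omega>))" for \<omega>
  proof -
    have "(\<Prod>e\<in>A \<union> B. Y e \<omega>) = (\<Prod>e\<in>A \<union> B. if e \<in> A then a (W (fst e) (snd e) \<omega>) else 1) *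
        (\<Prod>e\<in>A \<union> B. if e \<in> B then cnj (b (W (fst e) (snd e) \<omega>)) else 1)"
      by (simp add: Y_def g_def prod.distrib)
    also have "(\<Prod>e\<in>A \<union> B. if e \<in> A then a (W (fst e) (snd e) \<omega>) else 1) = (\<Prod>e\<in>(A \<union> B) \<inter> A. a (W (fst e) (snd e) \<omega>))"
      by (rule prod.inter_restrict[OF fin, symmetric])
    also have "(A \<union> B) \<inter> A = A" by blast
    also have "(\<Prod>e\<in>A \<union> B. if e \<in> B then cnj (b (W (fst e) (snd e) \<omega>)) else 1) = (\<Prod>e\<in>(A \<union> B) \<inter> B. cnj (b (W (fst e) (snd e) \<omega>)))"
      by (rule prod.inter_restrict[OF fin, symmetric])
    also have "(A \<union> B) \<inter> B = B" by blast
    finally show ?thesis by simp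
  qed
  have "integrable Pr (\<lambda>\<omega>. \<Prod>e\<in>A \<union> B. Y e \<omega>)" by (rule indep_vars_integrable[OF fin ind intY])
  thus "integrable Pr (\<lambda>\<omega>. (\<Prod>e\<in>A. a (W (fst e) (snd e) \<omega>)) * cnj (\<Prod>e\<in>B. b (W (fst e) (snd e) \<omega>)))"
    by (simp add: prodeq)
  have "integral\<^sup>L Pr (\<lambda>\<omega>. (\<Prod>e\<in>A. a (W (fst e) (snd e) \<omega>)) * cnj (\<Prod>e\<in>B. b (W (fst e) (snd e) \<omega>)))
      = integral\<^sup>L Pr (\<lambda>\<omega>. \<Prod>e\<in>A \<union> B. Y e \<omega>)" by (simp add: prodeq)
  also have "\<dots> = (\<Prod>e\<in>A \<union> B. integral\<^sup>L Pr (Y e))" by (rule indep_vars_lebesgue_integral[OF fin ind intY])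
  also have "\<dots> = (if A = B then (integral\<^sup>L Pr (\<lambda>\<omega>. a (W 0 0 \<omega>) * cnj (b (W 0 0 \<omega>)))) ^ card A else 0)"
  proof (cases "A = B")
    case True
    have "integral\<^sup>L Pr (Y e) = integral\<^sup>L Pr (\<lambda>\<omega>. a (W 0 0 \<omega>) * cnj (b (W 0 0 \<omega>)))" if e: "e \<in> A" for e
    proof -
      obtain i j where [simp]: "e = (i,j)" by (cases e)
      have g2: "(\<lambda>z. a z * cnj (b z)) \<in> borel_measurable borel" using a b by measurable
      have "integral\<^sup>L Pr (Y e) = integral\<^sup>L Pr (\<lambda>\<omega>. a (W i j \<omega>) * cnj (b (W i j \<omega>)))"
      proof -
        have "Y e = (\<lambda>\<omega>. a (W i j \<omega>) * cnj (b (W i j \<omega>)))" using e True by (simp add: Y_def g_def fun_eq_iff)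
        thus ?thesis by simp
      qed
      also have "\<dots> = integral\<^sup>L Pr (\<lambda>\<omega>. a (W 0 0 \<omega>) * cnj (b (W 0 0 \<omega>)))"
        by (rule transfer_int[OF g2])
      finally show ?thesis .
    qed
    thus ?thesis using True by simp
  next
    case False
    then obtain e where e: "e \<in> A \<union> B" "(e \<in> A) \<noteq> (e \<in> B)" by blast
    obtain i j where [simp]: "e = (i,j)" by (cases e)
    have "integral\<^sup>L Pr (Y e) = 0"
    proof (cases "e \<in> A")
      case True
      hence "Y e = (\<lambda>\<omega>. a (W i j \<omega>))" using e by (simp add: Y_def g_def fun_eq_iff)
      hence "integral\<^sup>L Pr (Y e) = integral\<^sup>L Pr (\<lambda>\<omega>. a (W i j \<omega>))" by simp
      also have "\<dots> = 0" using transfer_int[OF a, of i j] a0 by simp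
      finally show ?thesis .
    next
      case False
      hence "Y e = (\<lambda>\<omega>. cnj (b (W i j \<omega>)))" using e by (simp add: Y_def g_def fun_eq_iff)
      hence "integral\<^sup>L Pr (Y e) = integral\<^sup>L Pr (\<lambda>\<omega>. cnj (b (W i j \<omega>)))" by simp
      also have "\<dots> = 0" using transfer_int[OF b, of i j] b0 by simp
      finally show ?thesis .
    qed
    hence "(\<Prod>e\<in>A \<union> B. integral\<^sup>L Pr (Y e)) = 0" using e(1) fin by (intro prod_zero) blast+
    thus ?thesis using False by simp
  qed
  finally show "integral\<^sup>L Pr (\<lambda>\<omega>. (\<Prod>e\<in>A. a (W (fst e) (snd e) \<omega>)) * cnj (\<Prod>e\<in>B. b (W (fst e) (snd e) \<omega>)))
         = (if A = B then (integral\<^sup>L Pr (\<lambda>\<omega>. a (W 0 0 \<omega>) * cnj (b (W 0 0 \<omega>)))) ^ card A else 0)" .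
qed

end



definition hm :: "real \<Rightarrow> complex \<Rightarrow> complex" where
  "hm m z = (if cmod z \<le> m then z else 0)"

lemma hm_meas[measurable]: "hm m \<in> borel_measurable borel"
  unfolding hm_def by measurable

lemma hm_bound: "cmod (hm m z) \<le> cmod z" by (simp add: hm_def)

lemma Pk_expand:
  "Pk n k X = (\<Sum>(I,p)\<in>Fset n k. of_int (sign p) * (\<Prod>i\<in>I. X i (p i)))"
proof -
  have fin: "finite {I. I \<subseteq> {..<n} \<and> card I = k}" by (rule finite_subset[of _ "Pow {..<n}"]) auto
  have "Pk n k X = (\<Sum>I\<in>{I. I \<subseteq> {..<n} \<and> card I = k}. \<Sum>p\<in>{p. p permutes I}. of_int (sign p) * (\<Prod>i\<in>I. X i (p i)))"
    by (simp add: Pk_def detI_def)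
  also have "\<dots> = (\<Sum>(I,p)\<in>Fset n k. of_int (sign p) * (\<Prod>i\<in>I. X i (p i)))"
    unfolding Fset_def
    by (rule sum.Sigma[OF fin]) (auto intro!: finite_permutations intro: finite_subset[of _ "{..<n}"])
  finally show ?thesis .
qed

definition Et :: "nat set \<times> (nat \<Rightarrow> nat) \<Rightarrow> (nat \<times> nat) set" where
  "Et t = (\<lambda>i. (i, snd t i)) ` fst t"

lemma Et_inj: "t \<in> Fset n k \<Longrightarrow> t' \<in> Fset n k \<Longrightarrow> Et t = Et t' \<Longrightarrow> t = t'"
proof -
  assume t: "t \<in> Fset n k" and t': "t' \<in> Fset n k" and eq: "Et t = Et t'"
  obtain I p where [simp]: "t = (I,p)" by (cases t)
  obtain I' p' where [simp]: "t' = (I',p')" by (cases t')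
  have pI: "p permutes I" and pI': "p' permutes I'" using t t' by (auto simp: Fset_def)
  have II: "I = I'"
  proof -
    have "fst ` Et t = I" "fst ` Et t' = I'" by (auto simp: Et_def image_image)
    thus ?thesis using eq by simp
  qed
  have "p x = p' x" for x
  proof (cases "x \<in> I")
    case True
    hence "(x, p x) \<in> Et t'" using eq by (auto simp: Et_def)
    thus ?thesis by (auto simp: Et_def)
  next
    case False
    thus ?thesis using II pI pI' by (simp add: permutes_not_in)
  qed
  thus "t = t'" using II by (auto simp: fun_eq_iff)
qed

lemma Et_card: "t \<in> Fset n k \<Longrightarrow> card (Et t) = k"
proof -
  assume t: "t \<in> Fset n k"
  obtain I p where [simp]: "t = (I,p)" by (cases t)
  have "inj_on (\<lambda>i. (i, p i)) I" by (auto intro: inj_onI)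
  thus ?thesis using t by (simp add: Et_def card_image Fset_def)
qed

lemma Et_prod: "(\<Prod>i\<in>I. g i (p i)) = (\<Prod>e\<in>Et (I,p). g (fst e) (snd e))"
proof -
  have "inj_on (\<lambda>i. (i, p i)) I" by (auto intro: inj_onI)
  thus ?thesis by (simp add: Et_def prod.reindex)
qed

lemma finite_Et: "t \<in> Fset n k \<Longrightarrow> finite (Et t)"
proof -
  assume t: "t \<in> Fset n k"
  obtain I p where [simp]: "t = (I,p)" by (cases t)
  have "I \<subseteq> {..<n}" using t by (simp add: Fset_def)
  hence "finite I" using finite_subset by blast
  thus ?thesis by (simp add: Et_def)
qed

definition mu :: "'s measure \<Rightarrow> (nat \<Rightarrow> nat \<Rightarrow> 's \<Rightarrow> complex) \<Rightarrow> real \<Rightarrow> complex" where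
  "mu Pr W m = integral\<^sup>L Pr (\<lambda>\<omega>. hm m (W 0 0 \<omega>))"
definition fm :: "'s measure \<Rightarrow> (nat \<Rightarrow> nat \<Rightarrow> 's \<Rightarrow> complex) \<Rightarrow> real \<Rightarrow> complex \<Rightarrow> complex" where
  "fm Pr W m z = hm m z - mu Pr W m"
definition alpha :: "'s measure \<Rightarrow> (nat \<Rightarrow> nat \<Rightarrow> 's \<Rightarrow> complex) \<Rightarrow> (complex \<Rightarrow> complex) \<Rightarrow> (complex \<Rightarrow> complex) \<Rightarrow> complex" where
  "alpha Pr W a b = integral\<^sup>L Pr (\<lambda>\<omega>. a (W 0 0 \<omega>) * cnj (b (W 0 0 \<omega>)))"
definition Dk :: "'s measure \<Rightarrow> (nat \<Rightarrow> nat \<Rightarrow> 's \<Rightarrow> complex) \<Rightarrow> nat \<Rightarrow> real \<Rightarrow> complex" where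
  "Dk Pr W k m = alpha Pr W (\<lambda>z. z) (\<lambda>z. z) ^ k - alpha Pr W (\<lambda>z. z) (fm Pr W m) ^ k
     - alpha Pr W (fm Pr W m) (\<lambda>z. z) ^ k + alpha Pr W (fm Pr W m) (fm Pr W m) ^ k"

context
  fixes Pr :: "'s measure" and W :: "nat \<Rightarrow> nat \<Rightarrow> 's \<Rightarrow> complex"
  assumes ps: "prob_space Pr"
    and meas: "\<And>i j. W i j \<in> borel_measurable Pr"
    and indep: "prob_space.indep_vars Pr (\<lambda>_. borel) (\<lambda>(i, j). W i j) UNIV"
    and ident: "\<And>i j. distr Pr borel (W i j) = distr Pr borel (W 0 0)"
    and int1: "integrable Pr (W 0 0)"
    and mean0: "integral\<^sup>L Pr (W 0 0) = 0"
    and int2: "integrable Pr (\<lambda>\<omega>. (cmod (W 0 0 \<omega>))\<^sup>2)"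
    and var1: "integral\<^sup>L Pr (\<lambda>\<omega>. (cmod (W 0 0 \<omega>))\<^sup>2) = 1"
begin

interpretation prob_space Pr by (rule ps)

lemmas KL' = KL[OF ps meas indep ident int1 int2]
lemmas transfer_int' = transfer_int[OF ps meas indep ident int1 int2]
lemmas int_lin' = int_lin[OF ps meas indep ident int1 int2]

lemma fm_meas[measurable]: "fm Pr W m \<in> borel_measurable borel" unfolding fm_def by measurable

lemma fm_bound: "cmod (fm Pr W m z) \<le> cmod z + cmod (mu Pr W m)"
  unfolding fm_def using hm_bound[of m z] norm_triangle_ineq4[of "hm m z" "mu Pr W m"] by linarith

lemma id_bound: "cmod z \<le> cmod z + cmod (mu Pr W m)" by simp

lemma hm_int: "integrable Pr (\<lambda>\<omega>. hm m (W i j \<omega>))"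
  by (rule int_lin'[OF hm_meas, of _ 0]) (auto simp: hm_bound)

lemma fm_mean: "integral\<^sup>L Pr (\<lambda>\<omega>. fm Pr W m (W 0 0 \<omega>)) = 0"
  using hm_int[of m 0 0] by (simp add: fm_def mu_def prob_space)

lemma id_meas: "(\<lambda>z::complex. z) \<in> borel_measurable borel" by simp

lemma trunc_eq: "trunc_centered Pr m (W i j) \<omega> = fm Pr W m (W i j \<omega>)"
proof -
  have "integral\<^sup>L Pr (\<lambda>\<omega>'. if cmod (W i j \<omega>') \<le> m then W i j \<omega>' else 0) = integral\<^sup>L Pr (\<lambda>\<omega>'. hm m (W i j \<omega>'))"
    by (simp add: hm_def)
  also have "\<dots> = mu Pr W m" unfolding mu_def by (rule transfer_int'[OF hm_meas])
  finally show ?thesis by (simp add: trunc_centered_def fm_def hm_def)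
qed

lemma term_int:
  fixes m :: real
  assumes t: "t \<in> Fset n k" and t': "t' \<in> Fset n k"
  defines "P1 \<equiv> \<lambda>t \<omega>. \<Prod>e\<in>Et t. W (fst e) (snd e) \<omega>"
    and "P2 \<equiv> \<lambda>t \<omega>. \<Prod>e\<in>Et t. fm Pr W m (W (fst e) (snd e) \<omega>)"
  shows "integrable Pr (\<lambda>\<omega>. (P1 t \<omega> - P2 t \<omega>) * cnj (P1 t' \<omega> - P2 t' \<omega>))"
    and "integral\<^sup>L Pr (\<lambda>\<omega>. (P1 t \<omega> - P2 t \<omega>) * cnj (P1 t' \<omega> - P2 t' \<omega>)) = (if t = t' then Dk Pr W k m else 0)"
proof -
  have A: "finite (Et t)" "finite (Et t')" using finite_Et t t' by auto
  have M: "0 \<le> cmod (mu Pr W m)" by simp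
  have m1: "integral\<^sup>L Pr (\<lambda>\<omega>. (\<lambda>z. z) (W 0 0 \<omega>)) = 0" using mean0 by simp
  note K11 = KL'[OF id_meas id_bound id_meas id_bound M m1 m1 A]
  note K12 = KL'[OF id_meas id_bound fm_meas fm_bound M m1 fm_mean A]
  note K21 = KL'[OF fm_meas fm_bound id_meas id_bound M fm_mean m1 A]
  note K22 = KL'[OF fm_meas fm_bound fm_meas fm_bound M fm_mean fm_mean A]
  have eq: "(P1 t \<omega> - P2 t \<omega>) * cnj (P1 t' \<omega> - P2 t' \<omega>) =
     (P1 t \<omega> * cnj (P1 t' \<omega>) - P1 t \<omega> * cnj (P2 t' \<omega>)) - (P2 t \<omega> * cnj (P1 t' \<omega>) - P2 t \<omega> * cnj (P2 t' \<omega>))" for \<omega>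
    by (simp add: algebra_simps)
  have feq: "(\<lambda>\<omega>. (P1 t \<omega> - P2 t \<omega>) * cnj (P1 t' \<omega> - P2 t' \<omega>)) =
     (\<lambda>\<omega>. (P1 t \<omega> * cnj (P1 t' \<omega>) - P1 t \<omega> * cnj (P2 t' \<omega>)) - (P2 t \<omega> * cnj (P1 t' \<omega>) - P2 t \<omega> * cnj (P2 t' \<omega>)))"
    by (intro ext eq)
  have i11: "integrable Pr (\<lambda>\<omega>. P1 t \<omega> * cnj (P1 t' \<omega>))" using K11(1) by (simp add: P1_def P2_def)
  have i12: "integrable Pr (\<lambda>\<omega>. P1 t \<omega> * cnj (P2 t' \<omega>))" using K12(1) by (simp add: P1_def P2_def)
  have i21: "integrable Pr (\<lambda>\<omega>. P2 t \<omega> * cnj (P1 t' \<omega>))" using K21(1) by (simp add: P1_def P2_def)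
  have i22: "integrable Pr (\<lambda>\<omega>. P2 t \<omega> * cnj (P2 t' \<omega>))" using K22(1) by (simp add: P1_def P2_def)
  have tt: "(Et t = Et t') \<longleftrightarrow> (t = t')" using Et_inj[OF t t'] by auto
  have ck: "card (Et t) = k" by (rule Et_card[OF t])
  have ck': "card (Et t') = k" by (rule Et_card[OF t'])
  have v11: "integral\<^sup>L Pr (\<lambda>\<omega>. P1 t \<omega> * cnj (P1 t' \<omega>)) = (if t = t' then alpha Pr W (\<lambda>z. z) (\<lambda>z. z) ^ k else 0)"
    using K11(2) by (simp add: P1_def P2_def tt ck ck' alpha_def)
  have v12: "integral\<^sup>L Pr (\<lambda>\<omega>. P1 t \<omega> * cnj (P2 t' \<omega>)) = (if t = t' then alpha Pr W (\<lambda>z. z) (fm Pr W m) ^ k else 0)"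
    using K12(2) by (simp add: P1_def P2_def tt ck ck' alpha_def)
  have v21: "integral\<^sup>L Pr (\<lambda>\<omega>. P2 t \<omega> * cnj (P1 t' \<omega>)) = (if t = t' then alpha Pr W (fm Pr W m) (\<lambda>z. z) ^ k else 0)"
    using K21(2) by (simp add: P1_def P2_def tt ck ck' alpha_def)
  have v22: "integral\<^sup>L Pr (\<lambda>\<omega>. P2 t \<omega> * cnj (P2 t' \<omega>)) = (if t = t' then alpha Pr W (fm Pr W m) (fm Pr W m) ^ k else 0)"
    using K22(2) by (simp add: P1_def P2_def tt ck ck' alpha_def)
  show "integrable Pr (\<lambda>\<omega>. (P1 t \<omega> - P2 t \<omega>) * cnj (P1 t' \<omega> - P2 t' \<omega>))"
    unfolding feq by (intro Bochner_Integration.integrable_diff i11 i12 i21 i22)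
  show "integral\<^sup>L Pr (\<lambda>\<omega>. (P1 t \<omega> - P2 t \<omega>) * cnj (P1 t' \<omega> - P2 t' \<omega>)) = (if t = t' then Dk Pr W k m else 0)"
    unfolding feq using i11 i12 i21 i22 v11 v12 v21 v22 by (simp add: Dk_def)
qed

lemma sign_sq: "(of_int (sign p) :: complex) * of_int (sign p) = 1"
  by (simp add: sign_def)

lemma main_identity:
  fixes S :: "nat \<Rightarrow> nat \<Rightarrow> real"
  assumes Sn: "\<And>i j. i < n \<Longrightarrow> j < n \<Longrightarrow> 0 \<le> S i j"
  shows "(\<integral>\<^sup>+\<omega>. ennreal ((cmod (Pk n k (\<lambda>i j. complex_of_real (sqrt (S i j)) * W i j \<omega>)
            - Pk n k (\<lambda>i j. complex_of_real (sqrt (S i j)) * trunc_centered Pr m (W i j) \<omega>)))\<^sup>2) \<partial>Pr)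
        = ennreal (Q n S k * Re (Dk Pr W k m))"
proof -
  define F where "F = Fset n k"
  define c where "c t = (case t of (I,p) \<Rightarrow> of_int (sign p) * complex_of_real (\<Prod>i\<in>I. sqrt (S i (p i))))" for t
  define P1 where "P1 t \<omega> = (\<Prod>e\<in>Et t. W (fst e) (snd e) \<omega>)" for t \<omega>
  define P2 where "P2 t \<omega> = (\<Prod>e\<in>Et t. fm Pr W m (W (fst e) (snd e) \<omega>))" for t \<omega>
  define D where "D \<omega> = (\<Sum>t\<in>F. c t * (P1 t \<omega> - P2 t \<omega>))" for \<omega>
  have finF: "finite F" by (simp add: F_def finite_Fset)
  have Deq: "Pk n k (\<lambda>i j. complex_of_real (sqrt (S i j)) * W i j \<omega>)
            - Pk n k (\<lambda>i j. complex_of_real (sqrt (S i j)) * trunc_centered Pr m (W i j) \<omega>) = D \<omega>" for \<omega>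
  proof -
    have "Pk n k (\<lambda>i j. complex_of_real (sqrt (S i j)) * W i j \<omega>)
            - Pk n k (\<lambda>i j. complex_of_real (sqrt (S i j)) * trunc_centered Pr m (W i j) \<omega>)
        = (\<Sum>t\<in>F. (case t of (I,p) \<Rightarrow> of_int (sign p) * (\<Prod>i\<in>I. complex_of_real (sqrt (S i (p i))) * W i (p i) \<omega>))
             - (case t of (I,p) \<Rightarrow> of_int (sign p) * (\<Prod>i\<in>I. complex_of_real (sqrt (S i (p i))) * trunc_centered Pr m (W i (p i)) \<omega>)))"
      unfolding Pk_expand F_def by (simp add: sum_subtractf split_def)
    also have "\<dots> = D \<omega>"
      unfolding D_def
    proof (intro sum.cong refl)
      fix t assume "t \<in> F"
      obtain I p where [simp]: "t = (I,p)" by (cases t)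
      have e1: "P1 (I,p) \<omega> = (\<Prod>i\<in>I. W i (p i) \<omega>)"
        unfolding P1_def by (rule Et_prod[of "\<lambda>a b. W a b \<omega>", symmetric])
      have e2: "P2 (I,p) \<omega> = (\<Prod>i\<in>I. fm Pr W m (W i (p i) \<omega>))"
        unfolding P2_def by (rule Et_prod[of "\<lambda>a b. fm Pr W m (W a b \<omega>)", symmetric])
      show "(case t of (I,p) \<Rightarrow> of_int (sign p) * (\<Prod>i\<in>I. complex_of_real (sqrt (S i (p i))) * W i (p i) \<omega>))
             - (case t of (I,p) \<Rightarrow> of_int (sign p) * (\<Prod>i\<in>I. complex_of_real (sqrt (S i (p i))) * trunc_centered Pr m (W i (p i)) \<omega>))
          = c t * (P1 t \<omega> - P2 t \<omega>)"
        by (simp add: c_def e1 e2 prod.distrib trunc_eq right_diff_distrib mult.assoc of_real_prod)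
    qed
    finally show ?thesis .
  qed
  have TI: "integrable Pr (\<lambda>\<omega>. (P1 t \<omega> - P2 t \<omega>) * cnj (P1 t' \<omega> - P2 t' \<omega>))"
    and TV: "integral\<^sup>L Pr (\<lambda>\<omega>. (P1 t \<omega> - P2 t \<omega>) * cnj (P1 t' \<omega> - P2 t' \<omega>)) = (if t = t' then Dk Pr W k m else 0)"
    if "t \<in> F" "t' \<in> F" for t t'
    using term_int[where t=t and t'=t' and m=m and n=n and k=k] that by (simp_all add: F_def P1_def P2_def)
  have DD: "D \<omega> * cnj (D \<omega>) = (\<Sum>t\<in>F. \<Sum>t'\<in>F. (c t * cnj (c t')) * ((P1 t \<omega> - P2 t \<omega>) * cnj (P1 t' \<omega> - P2 t' \<omega>)))" for \<omega>
    unfolding D_def by (simp add: sum_product mult_ac)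
  have intDD: "integrable Pr (\<lambda>\<omega>. D \<omega> * cnj (D \<omega>))"
    unfolding DD
  proof (intro Bochner_Integration.integrable_sum)
    fix t t' assume "t \<in> F" "t' \<in> F"
    thus "integrable Pr (\<lambda>\<omega>. (c t * cnj (c t')) * ((P1 t \<omega> - P2 t \<omega>) * cnj (P1 t' \<omega> - P2 t' \<omega>)))"
      using TI by (intro Bochner_Integration.integrable_mult_right) auto
  qed
  have cc: "c t * cnj (c t) = complex_of_real (wt S (fst t) (snd t))" if t: "t \<in> F" for t
  proof -
    obtain I p where [simp]: "t = (I,p)" by (cases t)
    have I: "I \<subseteq> {..<n}" and pI: "p permutes I" using t by (auto simp: F_def Fset_def)
    have "(\<Prod>i\<in>I. sqrt (S i (p i))) * (\<Prod>i\<in>I. sqrt (S i (p i))) = (\<Prod>i\<in>I. sqrt (S i (p i)) * sqrt (S i (p i)))"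
      by (rule prod.distrib[symmetric])
    also have "\<dots> = (\<Prod>i\<in>I. S i (p i))"
    proof (intro prod.cong refl)
      fix i assume i: "i \<in> I"
      have "p i \<in> I" using i pI by (simp add: permutes_in_image)
      hence "0 \<le> S i (p i)" using i I Sn by auto
      thus "sqrt (S i (p i)) * sqrt (S i (p i)) = S i (p i)" by simp
    qed
    finally have r: "(\<Prod>i\<in>I. sqrt (S i (p i))) * (\<Prod>i\<in>I. sqrt (S i (p i))) = (\<Prod>i\<in>I. S i (p i))" .
    have "c t * cnj (c t) = (of_int (sign p) * of_int (sign p)) *
        complex_of_real ((\<Prod>i\<in>I. sqrt (S i (p i))) * (\<Prod>i\<in>I. sqrt (S i (p i))))"
      by (simp add: c_def mult_ac)
    also have "\<dots> = complex_of_real (\<Prod>i\<in>I. S i (p i))" by (simp only: r sign_sq) simp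
    finally show ?thesis by (simp add: wt_def)
  qed
  have valDD: "integral\<^sup>L Pr (\<lambda>\<omega>. D \<omega> * cnj (D \<omega>)) = complex_of_real (Q n S k) * Dk Pr W k m"
  proof -
    have "integral\<^sup>L Pr (\<lambda>\<omega>. D \<omega> * cnj (D \<omega>)) = (\<Sum>t\<in>F. \<Sum>t'\<in>F. (c t * cnj (c t')) * (if t = t' then Dk Pr W k m else 0))"
      unfolding DD using TI TV
      by (simp add: Bochner_Integration.integral_sum Bochner_Integration.integrable_sum)
    also have "\<dots> = (\<Sum>t\<in>F. (c t * cnj (c t)) * Dk Pr W k m)"
      using finF by (simp add: if_distrib[of "\<lambda>x. _ * x"] cong: if_cong)
    also have "\<dots> = (\<Sum>t\<in>F. complex_of_real (wt S (fst t) (snd t)) * Dk Pr W k m)"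
      by (intro sum.cong refl) (simp add: cc)
    also have "\<dots> = complex_of_real (Q n S k) * Dk Pr W k m"
      by (simp add: Q_def F_def sum_distrib_right split_def)
    finally show ?thesis .
  qed
  have nsq: "complex_of_real ((cmod (D \<omega>))\<^sup>2) = D \<omega> * cnj (D \<omega>)" for \<omega> by (rule complex_norm_square)
  have intN: "integrable Pr (\<lambda>\<omega>. (cmod (D \<omega>))\<^sup>2)"
    using intDD unfolding nsq[symmetric] complex_of_real_integrable_eq .
  have "complex_of_real (integral\<^sup>L Pr (\<lambda>\<omega>. (cmod (D \<omega>))\<^sup>2)) = integral\<^sup>L Pr (\<lambda>\<omega>. complex_of_real ((cmod (D \<omega>))\<^sup>2))"
    by (rule integral_complex_of_real[symmetric])
  also have "\<dots> = integral\<^sup>L Pr (\<lambda>\<omega>. D \<omega> * cnj (D \<omega>))" by (simp only: nsq)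
  also have "\<dots> = complex_of_real (Q n S k) * Dk Pr W k m" by (rule valDD)
  finally have ceq: "complex_of_real (integral\<^sup>L Pr (\<lambda>\<omega>. (cmod (D \<omega>))\<^sup>2)) = complex_of_real (Q n S k) * Dk Pr W k m" .
  have valN: "integral\<^sup>L Pr (\<lambda>\<omega>. (cmod (D \<omega>))\<^sup>2) = Q n S k * Re (Dk Pr W k m)"
    using arg_cong[where f=Re, OF ceq] by simp
  have "(\<integral>\<^sup>+\<omega>. ennreal ((cmod (D \<omega>))\<^sup>2) \<partial>Pr) = ennreal (integral\<^sup>L Pr (\<lambda>\<omega>. (cmod (D \<omega>))\<^sup>2))"
    by (rule nn_integral_eq_integral[OF intN]) auto
  thus ?thesis unfolding Deq valN .
qed

end



context
  fixes Pr :: "'s measure" and W :: "nat \<Rightarrow> nat \<Rightarrow> 's \<Rightarrow> complex"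
  assumes ps: "prob_space Pr"
    and meas: "\<And>i j. W i j \<in> borel_measurable Pr"
    and indep: "prob_space.indep_vars Pr (\<lambda>_. borel) (\<lambda>(i, j). W i j) UNIV"
    and ident: "\<And>i j. distr Pr borel (W i j) = distr Pr borel (W 0 0)"
    and int1: "integrable Pr (W 0 0)"
    and mean0: "integral\<^sup>L Pr (W 0 0) = 0"
    and int2: "integrable Pr (\<lambda>\<omega>. (cmod (W 0 0 \<omega>))\<^sup>2)"
    and var1: "integral\<^sup>L Pr (\<lambda>\<omega>. (cmod (W 0 0 \<omega>))\<^sup>2) = 1"
begin

interpretation prob_space Pr by (rule ps)


lemmas hm_int' = hm_int[OF ps meas indep ident int1 mean0 int2 var1]
lemmas fm_bound0 = fm_bound[OF ps meas indep ident int1 mean0 int2 var1]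
lemmas fm_meas1[measurable] = fm_meas[OF ps meas indep ident int1 mean0 int2 var1]

definition c1 where "c1 = integral\<^sup>L Pr (\<lambda>\<omega>. cmod (W 0 0 \<omega>))"

lemma c1_nonneg: "0 \<le> c1" unfolding c1_def by simp

lemma mu_bound: "cmod (mu Pr W m) \<le> c1"
proof -
  have "cmod (mu Pr W m) \<le> integral\<^sup>L Pr (\<lambda>\<omega>. cmod (hm m (W 0 0 \<omega>)))"
    unfolding mu_def by (rule integral_norm_bound)
  also have "\<dots> \<le> c1" unfolding c1_def
    using hm_int'[of m 0 0] int1 by (intro integral_mono) (auto simp: hm_bound)
  finally show ?thesis .
qed

lemma hm_lim: "((\<lambda>m. hm m z) \<longlongrightarrow> z) at_top"
proof (rule tendsto_eventually)
  show "\<forall>\<^sub>F m in at_top. hm m z = z"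
    using eventually_ge_at_top[of "cmod z"] by eventually_elim (simp add: hm_def)
qed

lemma mu_lim: "(mu Pr W \<longlongrightarrow> 0) at_top"
proof -
  have "((\<lambda>t. integral\<^sup>L Pr (\<lambda>\<omega>. hm t (W 0 0 \<omega>))) \<longlongrightarrow> integral\<^sup>L Pr (W 0 0)) at_top"
  proof (rule integral_dominated_convergence_at_top[where w="\<lambda>\<omega>. cmod (W 0 0 \<omega>)"])
    show "W 0 0 \<in> borel_measurable Pr" by (rule meas)
    show "(\<lambda>\<omega>. hm t (W 0 0 \<omega>)) \<in> borel_measurable Pr" for t using meas by measurable
    show "integrable Pr (\<lambda>\<omega>. cmod (W 0 0 \<omega>))" using int1 by simp
    show "AE x in Pr. ((\<lambda>i. hm i (W 0 0 x)) \<longlongrightarrow> W 0 0 x) at_top" by (simp add: hm_lim)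
    show "\<forall>\<^sub>F i in at_top. AE x in Pr. norm (hm i (W 0 0 x)) \<le> cmod (W 0 0 x)"
      by (simp add: hm_bound)
  qed
  thus ?thesis using mean0 by (simp add: mu_def[abs_def])
qed

lemma fm_lim: "((\<lambda>m. fm Pr W m z) \<longlongrightarrow> z) at_top"
proof -
  have "((\<lambda>m. hm m z - mu Pr W m) \<longlongrightarrow> z - 0) at_top" by (intro tendsto_diff hm_lim mu_lim)
  thus ?thesis by (simp add: fm_def)
qed

lemma fm_bound': "cmod (fm Pr W m z) \<le> cmod z + c1"
  using fm_bound0[of m z] mu_bound[of m] by simp

lemma alpha11: "alpha Pr W (\<lambda>z. z) (\<lambda>z. z) = 1"
proof -
  have "integral\<^sup>L Pr (\<lambda>\<omega>. W 0 0 \<omega> * cnj (W 0 0 \<omega>)) = integral\<^sup>L Pr (\<lambda>\<omega>. complex_of_real ((cmod (W 0 0 \<omega>))\<^sup>2))"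
    by (simp only: complex_norm_square)
  also have "\<dots> = complex_of_real (integral\<^sup>L Pr (\<lambda>\<omega>. (cmod (W 0 0 \<omega>))\<^sup>2))"
    by (rule integral_complex_of_real)
  also have "\<dots> = 1" using var1 by simp
  finally show ?thesis by (simp add: alpha_def)
qed

lemma alpha_lim:
  fixes a b :: "real \<Rightarrow> complex \<Rightarrow> complex"
  assumes a: "\<And>m. a m \<in> borel_measurable borel" "\<And>m z. cmod (a m z) \<le> cmod z + c1" "\<And>z. ((\<lambda>m. a m z) \<longlongrightarrow> z) at_top"
    and b: "\<And>m. b m \<in> borel_measurable borel" "\<And>m z. cmod (b m z) \<le> cmod z + c1" "\<And>z. ((\<lambda>m. b m z) \<longlongrightarrow> z) at_top"
  shows "((\<lambda>m. alpha Pr W (a m) (b m)) \<longlongrightarrow> 1) at_top"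
proof -
  have "((\<lambda>t. integral\<^sup>L Pr (\<lambda>\<omega>. a t (W 0 0 \<omega>) * cnj (b t (W 0 0 \<omega>)))) \<longlongrightarrow>
        integral\<^sup>L Pr (\<lambda>\<omega>. W 0 0 \<omega> * cnj (W 0 0 \<omega>))) at_top"
  proof (rule integral_dominated_convergence_at_top[where w="\<lambda>\<omega>. (cmod (W 0 0 \<omega>))\<^sup>2 + 2 * c1 * cmod (W 0 0 \<omega>) + c1\<^sup>2"
      and s="\<lambda>t \<omega>. a t (W 0 0 \<omega>) * cnj (b t (W 0 0 \<omega>))" and f="\<lambda>\<omega>. W 0 0 \<omega> * cnj (W 0 0 \<omega>)"])
    show "(\<lambda>\<omega>. W 0 0 \<omega> * cnj (W 0 0 \<omega>)) \<in> borel_measurable Pr" using meas by measurable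
    show "(\<lambda>\<omega>. a t (W 0 0 \<omega>) * cnj (b t (W 0 0 \<omega>))) \<in> borel_measurable Pr" for t
      using meas a(1)[of t] b(1)[of t] by measurable
    show "integrable Pr (\<lambda>\<omega>. (cmod (W 0 0 \<omega>))\<^sup>2 + 2 * c1 * cmod (W 0 0 \<omega>) + c1\<^sup>2)"
      using int1 int2 by auto
    show "AE x in Pr. ((\<lambda>i. a i (W 0 0 x) * cnj (b i (W 0 0 x))) \<longlongrightarrow> W 0 0 x * cnj (W 0 0 x)) at_top"
      by (intro AE_I2 tendsto_mult tendsto_cnj a(3) b(3))
    show "\<forall>\<^sub>F i in at_top. AE x in Pr. norm (a i (W 0 0 x) * cnj (b i (W 0 0 x))) \<le>
       (cmod (W 0 0 x))\<^sup>2 + 2 * c1 * cmod (W 0 0 x) + c1\<^sup>2"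
    proof (intro always_eventually allI AE_I2)
      fix i x
      let ?z = "W 0 0 x"
      have "norm (a i ?z * cnj (b i ?z)) = cmod (a i ?z) * cmod (b i ?z)" by (simp add: norm_mult)
      also have "\<dots> \<le> (cmod ?z + c1) * (cmod ?z + c1)"
        by (rule mult_mono) (use a(2) b(2) c1_nonneg in \<open>auto intro: add_nonneg_nonneg\<close>)
      also have "\<dots> = (cmod ?z)\<^sup>2 + 2 * c1 * cmod ?z + c1\<^sup>2" by (simp add: power2_eq_square algebra_simps)
      finally show "norm (a i ?z * cnj (b i ?z)) \<le> (cmod ?z)\<^sup>2 + 2 * c1 * cmod ?z + c1\<^sup>2" .
    qed
  qed
  moreover have "integral\<^sup>L Pr (\<lambda>\<omega>. W 0 0 \<omega> * cnj (W 0 0 \<omega>)) = 1"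
  proof -
    have "integral\<^sup>L Pr (\<lambda>\<omega>. W 0 0 \<omega> * cnj (W 0 0 \<omega>)) = integral\<^sup>L Pr (\<lambda>\<omega>. complex_of_real ((cmod (W 0 0 \<omega>))\<^sup>2))"
      by (simp only: complex_norm_square)
    also have "\<dots> = complex_of_real (integral\<^sup>L Pr (\<lambda>\<omega>. (cmod (W 0 0 \<omega>))\<^sup>2))"
      by (rule integral_complex_of_real)
    also have "\<dots> = 1" using var1 by simp
    finally show ?thesis .
  qed
  ultimately show ?thesis by (simp add: alpha_def)
qed

lemma Dk_lim: "((\<lambda>m. Re (Dk Pr W k m)) \<longlongrightarrow> 0) at_top"
proof -
  have idb: "cmod z \<le> cmod z + c1" for z using c1_nonneg by simp
  have l11: "((\<lambda>m. alpha Pr W (\<lambda>z. z) (\<lambda>z. z)) \<longlongrightarrow> 1) at_top"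
    by (simp add: alpha11)
  have l12: "((\<lambda>m. alpha Pr W (\<lambda>z. z) (fm Pr W m)) \<longlongrightarrow> 1) at_top"
    by (rule alpha_lim[where a="\<lambda>m z. z" and b="\<lambda>m. fm Pr W m"]) (auto simp: idb c1_nonneg fm_bound' fm_lim)
  have l21: "((\<lambda>m. alpha Pr W (fm Pr W m) (\<lambda>z. z)) \<longlongrightarrow> 1) at_top"
    by (rule alpha_lim[where b="\<lambda>m z. z" and a="\<lambda>m. fm Pr W m"]) (auto simp: idb c1_nonneg fm_bound' fm_lim)
  have l22: "((\<lambda>m. alpha Pr W (fm Pr W m) (fm Pr W m)) \<longlongrightarrow> 1) at_top"
    by (rule alpha_lim[where b="\<lambda>m. fm Pr W m" and a="\<lambda>m. fm Pr W m"]) (auto simp: idb c1_nonneg fm_bound' fm_lim)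
  have "((\<lambda>m. Dk Pr W k m) \<longlongrightarrow> 1 ^ k - 1 ^ k - 1 ^ k + 1 ^ k) at_top"
    unfolding Dk_def by (intro tendsto_intros l11 l12 l21 l22)
  hence "((\<lambda>m. Re (Dk Pr W k m)) \<longlongrightarrow> Re (1 ^ k - 1 ^ k - 1 ^ k + 1 ^ k)) at_top"
    by (rule tendsto_Re)
  thus ?thesis by simp
qed

end



theorem lemma3p10:
  fixes Pr :: "'s measure"
    and W :: "nat \<Rightarrow> nat \<Rightarrow> 's \<Rightarrow> complex"
    and S :: "nat \<Rightarrow> nat \<Rightarrow> nat \<Rightarrow> real"
    and k :: nat
  assumes "prob_space Pr"
    and meas: "\<And>i j. W i j \<in> borel_measurable Pr"
    and indep: "prob_space.indep_vars Pr (\<lambda>_. borel) (\<lambda>(i, j). W i j) UNIV"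
    and ident: "\<And>i j. distr Pr borel (W i j) = distr Pr borel (W 0 0)"
    and int1: "integrable Pr (W 0 0)"
    and mean0: "integral\<^sup>L Pr (W 0 0) = 0"
    and int2: "integrable Pr (\<lambda>\<omega>. (cmod (W 0 0 \<omega>))\<^sup>2)"
    and var1: "integral\<^sup>L Pr (\<lambda>\<omega>. (cmod (W 0 0 \<omega>))\<^sup>2) = 1"
    and Snonneg: "\<And>n i j. i < n \<Longrightarrow> j < n \<Longrightarrow> 0 \<le> S n i j"
    and A2: "assumption2 S"
    and kpos: "0 < k"
  shows "\<exists>eps :: real \<Rightarrow> real. (eps \<longlongrightarrow> 0) at_top \<and>
    (\<forall>m > 0. \<forall>n \<ge> k.
       (\<integral>\<^sup>+ \<omega>. ennreal ((cmod (
           Pk n k (\<lambda>i j. complex_of_real (sqrt (S n i j)) * W i j \<omega>)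
         - Pk n k (\<lambda>i j. complex_of_real (sqrt (S n i j)) * trunc_centered Pr m (W i j) \<omega>)))\<^sup>2) \<partial>Pr)
       \<le> ennreal (eps m))"
proof -
  note ps = assms(1)
  obtain B where B: "\<And>n. Q n (S n) k \<le> B" using Q_bounded[OF Snonneg A2] by blast
  define eps where "eps m = B * Re (Dk Pr W k m)" for m
  have DL: "((\<lambda>m. Re (Dk Pr W k m)) \<longlongrightarrow> 0) at_top"
    by (rule Dk_lim[OF ps meas indep ident int1 mean0 int2 var1])
  have lim: "(eps \<longlongrightarrow> 0) at_top"
  proof -
    have "((\<lambda>m. B * Re (Dk Pr W k m)) \<longlongrightarrow> B * 0) at_top" by (intro tendsto_mult tendsto_const DL)
    thus ?thesis by (simp add: eps_def[abs_def])
  qed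
  have bnd: "(\<integral>\<^sup>+ \<omega>. ennreal ((cmod (
           Pk n k (\<lambda>i j. complex_of_real (sqrt (S n i j)) * W i j \<omega>)
         - Pk n k (\<lambda>i j. complex_of_real (sqrt (S n i j)) * trunc_centered Pr m (W i j) \<omega>)))\<^sup>2) \<partial>Pr)
       \<le> ennreal (eps m)" for m n
  proof -
    have Sn: "\<And>i j. i < n \<Longrightarrow> j < n \<Longrightarrow> 0 \<le> S n i j" using Snonneg by blast
    have eq: "(\<integral>\<^sup>+ \<omega>. ennreal ((cmod (
           Pk n k (\<lambda>i j. complex_of_real (sqrt (S n i j)) * W i j \<omega>)
         - Pk n k (\<lambda>i j. complex_of_real (sqrt (S n i j)) * trunc_centered Pr m (W i j) \<omega>)))\<^sup>2) \<partial>Pr)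
        = ennreal (Q n (S n) k * Re (Dk Pr W k m))"
      by (rule main_identity[OF ps meas indep ident int1 mean0 int2 var1 Sn])
    have Q0: "0 \<le> Q n (S n) k" by (rule Q_nonneg) (use Snonneg in auto)
    have "ennreal (Q n (S n) k * Re (Dk Pr W k m)) \<le> ennreal (B * Re (Dk Pr W k m))"
    proof (cases "0 \<le> Re (Dk Pr W k m)")
      case True
      hence "Q n (S n) k * Re (Dk Pr W k m) \<le> B * Re (Dk Pr W k m)" using B[of n] by (intro mult_right_mono) auto
      thus ?thesis by (rule ennreal_leI)
    next
      case False
      hence "Q n (S n) k * Re (Dk Pr W k m) \<le> 0" using Q0 by (simp add: mult_nonneg_nonpos)
      hence "ennreal (Q n (S n) k * Re (Dk Pr W k m)) = 0" by (simp add: ennreal_eq_0_iff)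
      thus ?thesis by simp
    qed
    thus ?thesis unfolding eq eps_def .
  qed
  show ?thesis using lim bnd by blast
qed

end
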